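(* Let $L\ge 18$. Then: (i) $M_S(L,3)=(L-4)/8$ if $L\equiv 4\pmod 8$; (ii) $M_S(L,3)=(L-2)/8$ if $L=2^{2t+1}+2$ for some integer $t\ge1$, or $L=2^{2t}-2^{t+1}+2$ for some integer $t\ge2$, or $L=2^{2t}+2^{t+1}+2$ for some integer $t\ge1$; (iii) $M_S(L,3)=(L+2)/8$ if $L=2^{2^t+1}-2$ for some integer $t\ge2$.
   Context: $\mathcal{P}(L,\omega)$ is the set of $\omega$-element subsets of $\mathbb{Z}_L$. For $\mathcal{I}\in\mathcal{P}(L,\omega)$: $d(\mathcal{I})=\{a-b \bmod L: a,b\in\mathcal{I}\}$, $d^*(\mathcal{I})=d(\mathcal{I})\setminus\{0\}$. A strongly conflict-avoiding code (SCAC) of length $L$ and weight $\omega$ is a set $\mathcal{C}=\{\mathcal{I}_1,\dots,\mathcal{I}_M\}\subseteq\mathcal{P}(L,\omega)$ such that for all $j\ne k$, $\big(d^*(\mathcal{I}_j)\cup(d^*(\mathcal{I}_j)+1)\cup(d^*(\mathcal{I}_j)-1)\big)\cap d(\mathcal{I}_k)=\emptyset$ (shifts mod $L$). $M_S(L,\omega)$ denotes the maximum number of codewords in an SCAC of length $L$ and weight $\omega$. *)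

theory Defs
  imports Main
begin

text \<open>Z_L is represented by the integers {0..<L}; all arithmetic is taken mod L.\<close>

definition Pset :: "nat \<Rightarrow> nat \<Rightarrow> int set set" where
  "Pset L w = {I. I \<subseteq> {0..<int L} \<and> card I = w}"

definition dset :: "nat \<Rightarrow> int set \<Rightarrow> int set" where
  "dset L I = {(a - b) mod int L | a b. a \<in> I \<and> b \<in> I}"

definition dstar :: "nat \<Rightarrow> int set \<Rightarrow> int set" where
  "dstar L I = dset L I - {0}"

definition shiftL :: "nat \<Rightarrow> int \<Rightarrow> int set \<Rightarrow> int set" where
  "shiftL L c A = (\<lambda>x. (x + c) mod int L) ` A"

definition is_SCAC :: "nat \<Rightarrow> nat \<Rightarrow> int set set \<Rightarrow> bool" where
  "is_SCAC L w C \<longleftrightarrow> C \<subseteq> Pset L w \<and>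
     (\<forall>I\<in>C. \<forall>J\<in>C. I \<noteq> J \<longrightarrow>
        (dstar L I \<union> shiftL L 1 (dstar L I) \<union> shiftL L (-1) (dstar L I)) \<inter> dset L J = {})"

definition M_S :: "nat \<Rightarrow> nat \<Rightarrow> nat" where
  "M_S L w = Max {card C | C. is_SCAC L w C}"

end

theory Submission
  imports Defs
begin

lemma sorted3:
  assumes "I \<in> Pset L 3"
  shows "\<exists>x y z. I = {x,y,z} \<and> 0 \<le> x \<and> x < y \<and> y < z \<and> z < int L"
proof -
  from assms have sub: "I \<subseteq> {0..<int L}" and c: "card I = 3" by (auto simp: Pset_def)
  from c obtain a b c where abc: "I = {a,b,c}" "a \<noteq> b" "b \<noteq> c" "a \<noteq> c"
    by (auto simp: card_3_iff)
  have r: "0 \<le> a" "a < int L" "0 \<le> b" "b < int L" "0 \<le> c" "c < int L" using sub abc by auto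
  have "\<exists>x y z. {a,b,c} = {x,y,z} \<and> x < y \<and> y < z"
  proof (cases "a < b")
    case True
    then show ?thesis
    proof (cases "b < c")
      case True then show ?thesis using \<open>a<b\<close> by blast
    next
      case False
      then show ?thesis
      proof (cases "a < c")
        case True then show ?thesis using \<open>a<b\<close> False abc by (rule_tac x=a in exI, rule_tac x=c in exI, rule_tac x=b in exI) auto
      next
        case False then show ?thesis using \<open>a<b\<close> \<open>\<not> b < c\<close> abc by (rule_tac x=c in exI, rule_tac x=a in exI, rule_tac x=b in exI) auto
      qed
    qed
  next
    case False
    then show ?thesis
    proof (cases "a < c")
      case True then show ?thesis using False abc by (rule_tac x=b in exI, rule_tac x=a in exI, rule_tac x=c in exI) auto
    next
      case False2: False
      then show ?thesis
      proof (cases "b < c")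
        case True then show ?thesis using False False2 abc by (rule_tac x=b in exI, rule_tac x=c in exI, rule_tac x=a in exI) auto
      next
        case False then show ?thesis using \<open>\<not> a < b\<close> False2 abc by (rule_tac x=c in exI, rule_tac x=b in exI, rule_tac x=a in exI) auto
      qed
    qed
  qed
  then obtain x y z where "{a,b,c} = {x,y,z}" "x < y" "y < z" by blast
  moreover have "0 \<le> x" "z < int L" using r calculation by auto
  ultimately show ?thesis using abc by blast
qed

lemma mod_small: "0 \<le> (d::int) \<Longrightarrow> d < L \<Longrightarrow> d mod L = d"
  by simp

lemma mod_negsmall: "0 < (d::int) \<Longrightarrow> d < L \<Longrightarrow> (-d) mod L = L - d"
proof -
  assume a: "0 < d" "d < L"
  have "(-d) mod L = (L - d) mod L" by (metis add.commute diff_conv_add_uminus mod_add_self2)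
  also have "\<dots> = L - d" using a by (intro mod_pos_pos_trivial) auto
  finally show ?thesis .
qed

lemma dset3:
  assumes "0 \<le> x" "x < y" "y < z" "z < int L"
  shows "dset L {x,y,z} = {0, y-x, z-y, z-x, int L-(y-x), int L-(z-y), int L-(z-x)}"
proof -
  have e: "(x-x) mod int L = 0" "(y-y) mod int L = 0" "(z-z) mod int L = 0"
    "(y-x) mod int L = y-x" "(z-y) mod int L = z-y" "(z-x) mod int L = z-x"
    "(x-y) mod int L = int L-(y-x)" "(y-z) mod int L = int L-(z-y)" "(x-z) mod int L = int L-(z-x)"
    using assms mod_negsmall[of "y-x" "int L"] mod_negsmall[of "z-y" "int L"] mod_negsmall[of "z-x" "int L"]
    by auto
  have "dset L {x,y,z} = {(x-x) mod int L, (x-y) mod int L, (x-z) mod int L,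
      (y-x) mod int L, (y-y) mod int L, (y-z) mod int L,
      (z-x) mod int L, (z-y) mod int L, (z-z) mod int L}"
    unfolding dset_def by blast
  also have "\<dots> = {0, y-x, z-y, z-x, int L-(y-x), int L-(z-y), int L-(z-x)}"
    unfolding e by blast
  finally show ?thesis .
qed

lemma card_ge_list: "finite S \<Longrightarrow> set xs \<subseteq> S \<Longrightarrow> distinct xs \<Longrightarrow> length xs \<le> card S"
  by (metis card_mono distinct_card)

lemma core:
  fixes g1 g2 g3 L :: int
  assumes g: "g1 \<ge> 2" "g2 \<ge> 2" "g3 \<ge> 2" "g1+g2+g3 = L"
  defines "h1 \<equiv> min g1 (L-g1)" and "h2 \<equiv> min g2 (L-g2)" and "h3 \<equiv> min g3 (L-g3)"
  defines "S \<equiv> {h1,h1+1,h2,h2+1,h3,h3+1}"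
  shows "card S \<ge> 2"
    and "card S \<ge> 3 \<or> (\<exists>h\<in>{h1,h2,h3}. 3*h = L)"
    and "card S \<ge> 4 \<or> (\<exists>h\<in>{h1,h2,h3}. L \<le> 3*h+1 \<and> 3*h \<le> L+1)"
    and "card S = 4 \<Longrightarrow> x \<in> {h1,h2,h3} \<Longrightarrow> x+1 \<in> {h1,h2,h3} \<Longrightarrow> (\<exists>h\<in>{h1,h2,h3}. 3*h = L)"
proof -
  have fin: "finite S" by (simp add: S_def)
  have hf: "h1 \<le> g1" "h1 \<le> L - g1" "h1 = g1 \<or> h1 = L - g1"
     "h2 \<le> g2" "h2 \<le> L - g2" "h2 = g2 \<or> h2 = L - g2"
     "h3 \<le> g3" "h3 \<le> L - g3" "h3 = g3 \<or> h3 = L - g3"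
    unfolding h1_def h2_def h3_def by auto
  show "card S \<ge> 2"
    using card_ge_list[OF fin, of "[h1,h1+1]"] by (simp add: S_def)
  show "card S \<ge> 3 \<or> (\<exists>h\<in>{h1,h2,h3}. 3*h = L)"
  proof (cases "h1 = h2 \<and> h2 = h3")
    case True
    then have "3*h1 = L" using g hf by smt
    then show ?thesis by auto
  next
    case False
    then have "h1 \<noteq> h2 \<or> h1 \<noteq> h3" by auto
    then show ?thesis
    proof
      assume "h1 \<noteq> h2"
      then show ?thesis
      proof (cases "h2 = h1+1")
        case True
        then show ?thesis using card_ge_list[OF fin, of "[h1,h1+1,h2+1]"] by (simp add: S_def)
      next
        case False
        then show ?thesis using \<open>h1 \<noteq> h2\<close> card_ge_list[OF fin, of "[h1,h1+1,h2]"] by (simp add: S_def)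
      qed
    next
      assume "h1 \<noteq> h3"
      then show ?thesis
      proof (cases "h3 = h1+1")
        case True
        then show ?thesis using card_ge_list[OF fin, of "[h1,h1+1,h3+1]"] by (simp add: S_def)
      next
        case False
        then show ?thesis using \<open>h1 \<noteq> h3\<close> card_ge_list[OF fin, of "[h1,h1+1,h3]"] by (simp add: S_def)
      qed
    qed
  qed
  show "card S \<ge> 4 \<or> (\<exists>h\<in>{h1,h2,h3}. L \<le> 3*h+1 \<and> 3*h \<le> L+1)"
  proof (rule ccontr)
    assume na: "\<not> ?thesis"
    then have nh: "\<not> (L \<le> 3*h1+1 \<and> 3*h1 \<le> L+1)" "\<not> (L \<le> 3*h2+1 \<and> 3*h2 \<le> L+1)"
       "\<not> (L \<le> 3*h3+1 \<and> 3*h3 \<le> L+1)" by auto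
    have e12: "h1 = h2 \<Longrightarrow> h3 \<noteq> h1 \<and> h3 \<noteq> h1+1 \<and> h3 \<noteq> h1 - 1"
      using g nh hf by smt
    have e13: "h1 = h3 \<Longrightarrow> h2 \<noteq> h1 \<and> h2 \<noteq> h1+1 \<and> h2 \<noteq> h1 - 1"
      using g nh hf by smt
    have e23: "h2 = h3 \<Longrightarrow> h1 \<noteq> h2 \<and> h1 \<noteq> h2+1 \<and> h1 \<noteq> h2 - 1"
      using g nh hf by smt
    have "card S \<ge> 4"
    proof (cases "h1 = h2")
      case True
      then show ?thesis using e12 card_ge_list[OF fin, of "[h1,h1+1,h3,h3+1]"] by (simp add: S_def)
    next
      case n12: False
      show ?thesis
      proof (cases "h1 = h3")
        case True
        then show ?thesis using e13 card_ge_list[OF fin, of "[h1,h1+1,h2,h2+1]"] by (simp add: S_def)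
      next
        case n13: False
        show ?thesis
        proof (cases "h2 = h3")
          case True
          then show ?thesis using e23 card_ge_list[OF fin, of "[h2,h2+1,h1,h1+1]"] by (simp add: S_def)
        next
          case n23: False
          define m where "m = max h1 (max h2 h3)"
          have "m+1 \<noteq> h1" "m+1 \<noteq> h2" "m+1 \<noteq> h3" "m+1 \<in> S" unfolding m_def S_def by (auto simp: max_def)
          then show ?thesis using n12 n13 n23 card_ge_list[OF fin, of "[h1,h2,h3,m+1]"] by (simp add: S_def)
        qed
      qed
    qed
    then show False using na by auto
  qed
  assume c4: "card S = 4" and x: "x \<in> {h1,h2,h3}" "x+1 \<in> {h1,h2,h3}"
  have tri: "x-1 \<in> {h1,h2,h3} \<or> x+2 \<in> {h1,h2,h3}"
  proof (rule ccontr)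
    assume nt: "\<not> ?thesis"
    show False
    proof (cases "{h1,h2,h3} \<subseteq> {x,x+1}")
      case True
      then have "S \<subseteq> {x,x+1,x+2}" unfolding S_def by auto
      then have "card S \<le> card {x,x+1,x+2}" by (intro card_mono) auto
      also have "\<dots> \<le> 3" by (simp add: card_insert_if)
      finally show False using c4 by simp
    next
      case False
      then obtain w where w: "w \<in> {h1,h2,h3}" "w \<noteq> x" "w \<noteq> x+1" by auto
      have "w \<noteq> x - 1" "w \<noteq> x+2" using w nt by auto
      then have "5 \<le> card S" using w x card_ge_list[OF fin, of "[x,x+1,x+2,w,w+1]"]
        by (auto simp: S_def)
      then show False using c4 by simp
    qed
  qed
  then have t: "(x - 1 = h1 \<or> x - 1 = h2 \<or> x - 1 = h3) \<or> (x + 2 = h1 \<or> x + 2 = h2 \<or> x + 2 = h3)"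
    by simp
  have xx: "x = h1 \<or> x = h2 \<or> x = h3" "x + 1 = h1 \<or> x + 1 = h2 \<or> x + 1 = h3" using x by auto
  have "3*h1 = L \<or> 3*h2 = L \<or> 3*h3 = L"
    using t xx g hf by smt
  then show "\<exists>h\<in>{h1,h2,h3}. 3*h = L" by auto
qed

definition Pp :: "nat \<Rightarrow> int set \<Rightarrow> int set" where
  "Pp L I = {a \<in> dstar L I. 2*a \<le> int L}"
definition Lo :: "nat \<Rightarrow> int set \<Rightarrow> int set" where
  "Lo L I = Pp L I \<union> (\<lambda>a. a+1) ` Pp L I"

lemma dset_range: "0 < L \<Longrightarrow> a \<in> dset L I \<Longrightarrow> 0 \<le> a \<and> a < int L"
  unfolding dset_def by auto

lemma zero_dset: "b \<in> I \<Longrightarrow> 0 \<in> dset L I"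
  unfolding dset_def by force

lemma sep:
  assumes "is_SCAC L 3 C" "I \<in> C" "J \<in> C" "I \<noteq> J" "a \<in> dstar L I" "b \<in> dset L J"
  shows "b \<noteq> a \<and> b \<noteq> (a+1) mod int L \<and> b \<noteq> (a-1) mod int L"
proof -
  have "(dstar L I \<union> shiftL L 1 (dstar L I) \<union> shiftL L (-1) (dstar L I)) \<inter> dset L J = {}"
    using assms(1-4) unfolding is_SCAC_def by blast
  then show ?thesis using assms(5,6) unfolding shiftL_def by auto
qed

lemma structI:
  assumes sc: "is_SCAC L 3 C" and IC: "I \<in> C" and JC: "J \<in> C" and ne: "I \<noteq> J"
  shows "\<exists>g1 g2 g3. g1 \<ge> 2 \<and> g2 \<ge> 2 \<and> g3 \<ge> 2 \<and> g1+g2+g3 = int L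
     \<and> dstar L I = {g1,g2,g3,int L-g1,int L-g2,int L-g3}
     \<and> Pp L I = {min g1 (int L-g1), min g2 (int L-g2), min g3 (int L-g3)}"
proof -
  have IP: "I \<in> Pset L 3" and JP: "J \<in> Pset L 3" using sc IC JC unfolding is_SCAC_def by auto
  obtain x y z where xyz: "I = {x,y,z}" "0 \<le> x" "x < y" "y < z" "z < int L" using sorted3[OF IP] by blast
  obtain x' y' z' where "J = {x',y',z'}" using sorted3[OF JP] by blast
  then have z0: "0 \<in> dset L J" using zero_dset by blast
  define g1 where "g1 = y - x"
  define g2 where "g2 = z - y"
  define g3 where "g3 = int L - (z - x)"
  have ds: "dstar L I = {g1,g2,g3,int L-g1,int L-g2,int L-g3}"
    unfolding dstar_def xyz(1) dset3[OF xyz(2-5)] g1_def g2_def g3_def using xyz by auto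
  have L0: "0 < L" using xyz by auto
  have no1: "a \<noteq> 1 \<and> a \<noteq> int L - 1" if "a \<in> dstar L I" for a
  proof -
    have r: "0 \<le> a" "a < int L" using dset_range[OF L0] that unfolding dstar_def by auto
    have "a \<noteq> 0" using that unfolding dstar_def by auto
    have s: "0 \<noteq> (a+1) mod int L" "0 \<noteq> (a-1) mod int L" using sep[OF sc IC JC ne that z0] by auto
    show ?thesis
    proof
      show "a \<noteq> 1" using s(2) by auto
      show "a \<noteq> int L - 1" using s(1) by auto
    qed
  qed
  have "g1 \<noteq> 1" "g2 \<noteq> 1" "g3 \<noteq> 1" using no1 ds by auto
  then have g: "g1 \<ge> 2" "g2 \<ge> 2" "g3 \<ge> 2" using xyz unfolding g1_def g2_def g3_def by auto
  have s: "g1+g2+g3 = int L" unfolding g1_def g2_def g3_def by simp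
  have "Pp L I = {min g1 (int L-g1), min g2 (int L-g2), min g3 (int L-g3)}"
    unfolding Pp_def ds using g s by (auto simp: min_def)
  then show ?thesis using g s ds by blast
qed

lemma sepP:
  assumes sc: "is_SCAC L 3 C" and IC: "I \<in> C" and JC: "J \<in> C" and ne: "I \<noteq> J"
    and a: "a \<in> Pp L I" and b: "b \<in> Pp L J" and L3: "L \<ge> 3"
  shows "b \<noteq> a \<and> b \<noteq> a+1 \<and> b \<noteq> a - 1"
proof -
  have ad: "a \<in> dstar L I" "2*a \<le> int L" using a unfolding Pp_def by auto
  have bd: "b \<in> dset L J" using b unfolding Pp_def dstar_def by auto
  have "0 \<le> a" "a \<noteq> 0" using dset_range[of L a I] ad L3 unfolding dstar_def by auto
  then have e: "(a+1) mod int L = a+1" "(a-1) mod int L = a - 1" using ad L3 by auto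
  show ?thesis using sep[OF sc IC JC ne ad(1) bd] e by auto
qed

lemma m4aux:
  fixes g h L :: int
  assumes "h = g \<or> h = L - g" "L mod 8 = 4" "even h"
  shows "even g" "4 dvd g \<Longrightarrow> 4 dvd h"
  using assms by presburger+

lemma m4fin:
  fixes g1 g2 g3 L :: int
  assumes "even g1" "even g2" "even g3" "g1+g2+g3 = L" "L mod 8 = 4"
  shows "4 dvd g1 \<or> 4 dvd g2 \<or> 4 dvd g3"
  using assms by presburger

lemma m4:
  fixes g1 g2 g3 L :: int
  assumes "g1 \<ge> 2" "g2 \<ge> 2" "g3 \<ge> 2" "g1+g2+g3 = L" "L mod 8 = 4"
   "even (min g1 (L-g1))" "even (min g2 (L-g2))" "even (min g3 (L-g3))"
  shows "4 dvd min g1 (L-g1) \<or> 4 dvd min g2 (L-g2) \<or> 4 dvd min g3 (L-g3)"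
proof -
  have d: "min g (L-g) = g \<or> min g (L-g) = L - g" for g by auto
  note a1 = m4aux[OF d[of g1] assms(5,6)]
  note a2 = m4aux[OF d[of g2] assms(5,7)]
  note a3 = m4aux[OF d[of g3] assms(5,8)]
  have "4 dvd g1 \<or> 4 dvd g2 \<or> 4 dvd g3" by (rule m4fin[OF a1(1) a2(1) a3(1) assms(4,5)])
  then show ?thesis using a1(2) a2(2) a3(2) by blast
qed

lemma tiling_even:
  fixes U :: "int set" and N :: int
  assumes U: "U \<subseteq> {2..N}" and ev: "even N" and nc: "\<forall>x\<in>U. x+1 \<notin> U"
    and cov: "{2..N+1} \<subseteq> U \<union> (\<lambda>x. x+1) ` U"
  shows "\<forall>x\<in>U. even x"
proof -
  have k: "2*int k + 2 \<le> N \<longrightarrow> 2*int k + 2 \<in> U" for k :: nat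
  proof (induction k)
    case 0
    show ?case
    proof
      assume "2 * int 0 + 2 \<le> N"
      then have "(2::int) \<in> {2..N+1}" by simp
      then have "2 \<in> U \<union> (\<lambda>x. x+1) ` U" using cov by blast
      moreover have "(2::int) \<notin> (\<lambda>x. x+1) ` U" using U by force
      ultimately show "2 * int 0 + 2 \<in> U" by simp
    qed
  next
    case (Suc k)
    show ?case
    proof
      assume a: "2 * int (Suc k) + 2 \<le> N"
      then have "2*int k + 4 \<in> {2..N+1}" by simp
      then have "2*int k + 4 \<in> U \<union> (\<lambda>x. x+1) ` U" using cov by blast
      moreover have "2*int k + 2 \<in> U" using Suc a by auto
      then have "2*int k + 2 + 1 \<notin> U" using nc by blast
      then have "2*int k + 3 \<notin> U" by (simp add: add.assoc)
      ultimately have "2*int k + 4 \<in> U" by (auto simp: algebra_simps)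
      then show "2 * int (Suc k) + 2 \<in> U" by (simp add: algebra_simps)
    qed
  qed
  show ?thesis
  proof (rule ccontr)
    assume "\<not> ?thesis"
    then obtain x where x: "x \<in> U" "odd x" by auto
    then have "x \<ge> 2" "x \<le> N" using U by auto
    then have "x + 1 \<le> N" using x ev by presburger
    obtain j where j: "x = 2*j+1" using x by (metis oddE)
    have "j \<ge> 1" using j \<open>x\<ge>2\<close> by simp
    then have "2 * int (nat j) + 2 = x+1" using j by simp
    then have "x+1 \<in> U" using k[of "nat j"] \<open>x+1 \<le> N\<close> by metis
    then show False using nc x by auto
  qed
qed

lemma LoI:
  assumes sc: "is_SCAC L 3 C" and IC: "I \<in> C" and JC: "J \<in> C" and ne: "I \<noteq> J"
  shows "\<exists>g1 g2 g3. g1 \<ge> 2 \<and> g2 \<ge> 2 \<and> g3 \<ge> 2 \<and> g1+g2+g3 = int L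
     \<and> Pp L I = {min g1 (int L-g1), min g2 (int L-g2), min g3 (int L-g3)}
     \<and> Lo L I = {min g1 (int L-g1), min g1 (int L-g1)+1, min g2 (int L-g2), min g2 (int L-g2)+1,
                 min g3 (int L-g3), min g3 (int L-g3)+1}"
proof -
  obtain g1 g2 g3 where g: "g1 \<ge> 2" "g2 \<ge> 2" "g3 \<ge> 2" "g1+g2+g3 = int L"
     "Pp L I = {min g1 (int L-g1), min g2 (int L-g2), min g3 (int L-g3)}"
    using structI[OF sc IC JC ne] by blast
  then have "Lo L I = {min g1 (int L-g1), min g1 (int L-g1)+1, min g2 (int L-g2), min g2 (int L-g2)+1,
                 min g3 (int L-g3), min g3 (int L-g3)+1}" unfolding Lo_def by auto
  then show ?thesis using g by blast
qed

lemma Lo_props: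
  assumes sc: "is_SCAC L 3 C" and IC: "I \<in> C" and JC: "J \<in> C" and ne: "I \<noteq> J"
  shows "card (Lo L I) \<ge> 2"
    and "card (Lo L I) \<ge> 3 \<or> (\<exists>h\<in>Pp L I. 3*h = int L)"
    and "card (Lo L I) \<ge> 4 \<or> (\<exists>h\<in>Pp L I. int L \<le> 3*h+1 \<and> 3*h \<le> int L+1)"
    and "card (Lo L I) = 4 \<Longrightarrow> x \<in> Pp L I \<Longrightarrow> x+1 \<in> Pp L I \<Longrightarrow> (\<exists>h\<in>Pp L I. 3*h = int L)"
    and "finite (Lo L I)" and "finite (Pp L I)"
proof -
  obtain g1 g2 g3 where g: "g1 \<ge> 2" "g2 \<ge> 2" "g3 \<ge> 2" "g1+g2+g3 = int L"
     and P: "Pp L I = {min g1 (int L-g1), min g2 (int L-g2), min g3 (int L-g3)}"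
     and Lq: "Lo L I = {min g1 (int L-g1), min g1 (int L-g1)+1, min g2 (int L-g2), min g2 (int L-g2)+1,
                 min g3 (int L-g3), min g3 (int L-g3)+1}"
    using LoI[OF sc IC JC ne] by blast
  note cr = core[OF g]
  show "card (Lo L I) \<ge> 2" using cr(1) Lq by simp
  show "card (Lo L I) \<ge> 3 \<or> (\<exists>h\<in>Pp L I. 3*h = int L)" using cr(2) Lq P by simp
  show "card (Lo L I) \<ge> 4 \<or> (\<exists>h\<in>Pp L I. int L \<le> 3*h+1 \<and> 3*h \<le> int L+1)" using cr(3) Lq P by simp
  show "card (Lo L I) = 4 \<Longrightarrow> x \<in> Pp L I \<Longrightarrow> x+1 \<in> Pp L I \<Longrightarrow> (\<exists>h\<in>Pp L I. 3*h = int L)"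
    using cr(4)[of x] Lq P by simp
  show "finite (Lo L I)" using Lq by simp
  show "finite (Pp L I)" using P by simp
qed

lemma Pp_range:
  assumes sc: "is_SCAC L 3 C" and IC: "I \<in> C" and JC: "J \<in> C" and ne: "I \<noteq> J" and ev: "even L"
  shows "Pp L I \<subseteq> {2..int (L div 2)}"
proof -
  obtain g1 g2 g3 where g: "g1 \<ge> 2" "g2 \<ge> 2" "g3 \<ge> 2" "g1+g2+g3 = int L"
     and P: "Pp L I = {min g1 (int L-g1), min g2 (int L-g2), min g3 (int L-g3)}"
    using structI[OF sc IC JC ne] by blast
  have L2: "int L = 2 * int (L div 2)" using ev by auto
  show ?thesis unfolding P using g L2 by (auto simp: min_def)
qed

lemma finite_Pset: "finite (Pset L w)"
proof -
  have "Pset L w \<subseteq> Pow {0..<int L}" unfolding Pset_def by auto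
  then show ?thesis by (rule finite_subset) simp
qed

lemma sum_all4:
  assumes "finite A" "\<forall>x\<in>A. (f x::nat) \<ge> 4" "(\<Sum>x\<in>A. f x) \<le> 4 * card A"
  shows "\<forall>x\<in>A. f x = 4"
proof
  fix x assume x: "x \<in> A"
  have "(\<Sum>x\<in>A. f x) = f x + (\<Sum>y\<in>A-{x}. f y)" using assms(1) x by (simp add: sum.remove)
  moreover have "(\<Sum>y\<in>A-{x}. f y) \<ge> (\<Sum>y\<in>A-{x}. 4)" using assms(2) by (intro sum_mono) auto
  moreover have "card (A - {x}) + 1 = card A" using assms(1) x
    by (metis Suc_eq_plus1 card_Suc_Diff1)
  ultimately show "f x = 4" using assms(2) x assms(3) by auto
qed

lemma upper_main:
  assumes sc: "is_SCAC L 3 C" and ev: "even L" and L18: "L \<ge> 18" and c2: "card C \<ge> 2"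
  shows "4 * card C \<le> L div 2 + 2"
    and "\<not> 3 dvd L \<Longrightarrow> 4 * card C \<le> L div 2 + 1"
    and "L mod 8 = 4 \<Longrightarrow> 4 * card C \<le> L div 2 - 2"
proof -
  define N where "N = L div 2"
  have L2: "int L = 2 * int N" using ev unfolding N_def by auto
  have finC: "finite C"
    using sc finite_Pset[of L 3] unfolding is_SCAC_def by (auto intro: finite_subset)
  have oth: "\<exists>J\<in>C. J \<noteq> I" if "I \<in> C" for I
  proof (rule ccontr)
    assume "\<not> ?thesis"
    then have "C \<subseteq> {I}" by auto
    then have "card C \<le> 1" using card_mono[of "{I}" C] by auto
    then show False using c2 by simp
  qed
  have L3: "L \<ge> 3" using L18 by simp
  have lo2: "card (Lo L I) \<ge> 2" and lo3: "card (Lo L I) \<ge> 3 \<or> (\<exists>h\<in>Pp L I. 3*h = int L)"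
    and lo4: "card (Lo L I) \<ge> 4 \<or> (\<exists>h\<in>Pp L I. int L \<le> 3*h+1 \<and> 3*h \<le> int L+1)"
    and lo4c: "card (Lo L I) = 4 \<Longrightarrow> x \<in> Pp L I \<Longrightarrow> x+1 \<in> Pp L I \<Longrightarrow> (\<exists>h\<in>Pp L I. 3*h = int L)"
    and finLo: "finite (Lo L I)" and finP: "finite (Pp L I)"
    and Prange: "Pp L I \<subseteq> {2..int N}"
    if IC0: "I \<in> C" for I x
  proof -
    obtain J where J: "J \<in> C" "J \<noteq> I" using oth[OF IC0] by blast
    note lp = Lo_props[OF sc IC0 J(1) J(2)[symmetric]]
    show "card (Lo L I) \<ge> 2" by (rule lp(1))
    show "card (Lo L I) \<ge> 3 \<or> (\<exists>h\<in>Pp L I. 3*h = int L)" by (rule lp(2))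
    show "card (Lo L I) \<ge> 4 \<or> (\<exists>h\<in>Pp L I. int L \<le> 3*h+1 \<and> 3*h \<le> int L+1)" by (rule lp(3))
    show "card (Lo L I) = 4 \<Longrightarrow> x \<in> Pp L I \<Longrightarrow> x+1 \<in> Pp L I \<Longrightarrow> (\<exists>h\<in>Pp L I. 3*h = int L)"
      by (rule lp(4))
    show "finite (Lo L I)" by (rule lp(5))
    show "finite (Pp L I)" by (rule lp(6))
    show "Pp L I \<subseteq> {2..int N}" using Pp_range[OF sc IC0 J(1) J(2)[symmetric] ev] N_def by simp
  qed
  have sp: "b \<noteq> a \<and> b \<noteq> a+1 \<and> b \<noteq> a - 1"
    if "I \<in> C" "J \<in> C" "I \<noteq> J" "a \<in> Pp L I" "b \<in> Pp L J" for I J a b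
    using sepP[OF sc that L3] .
  have Lorange: "Lo L I \<subseteq> {2..int N + 1}" if "I \<in> C" for I
    using Prange[OF that] unfolding Lo_def by auto
  have disj: "Lo L I \<inter> Lo L J = {}" if "I \<in> C" "J \<in> C" "I \<noteq> J" for I J
  proof (rule ccontr)
    assume "Lo L I \<inter> Lo L J \<noteq> {}"
    then obtain a b where ab: "a \<in> Pp L I" "b \<in> Pp L J" "a = b \<or> a = b+1 \<or> a+1 = b \<or> a+1 = b+1"
      unfolding Lo_def by blast
    show False using sp[OF that ab(1,2)] ab(3) by auto
  qed
  have sumeq: "card (\<Union>I\<in>C. Lo L I) = (\<Sum>I\<in>C. card (Lo L I))"
    using finC finLo disj by (intro card_UN_disjoint) auto
  have Usub: "(\<Union>I\<in>C. Lo L I) \<subseteq> {2..int N + 1}" using Lorange by blast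
  have cardN: "card {2..int N + 1} = N" by simp
  have sumle: "(\<Sum>I\<in>C. card (Lo L I)) \<le> N"
    using sumeq card_mono[OF _ Usub] cardN by simp
  have uniq: "I = J" if UQ: "I \<in> C" "J \<in> C" "card (Lo L I) < 4" "card (Lo L J) < 4" for I J
  proof (rule ccontr)
    assume ne: "I \<noteq> J"
    obtain a where a: "a \<in> Pp L I" "int L \<le> 3*a+1" "3*a \<le> int L+1" using lo4[OF UQ(1)] UQ(3) by auto
    obtain b where b: "b \<in> Pp L J" "int L \<le> 3*b+1" "3*b \<le> int L+1" using lo4[OF UQ(2)] UQ(4) by auto
    have "a = b" using a b by linarith
    then show False using sp[OF UQ(1,2) ne a(1) b(1)] by simp
  qed
  have main: "4 * card C \<le> N + 4 - card (Lo L I0) \<and> (\<forall>J\<in>C-{I0}. card (Lo L J) \<ge> 4)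
       \<and> card (Lo L I0) + (\<Sum>J\<in>C-{I0}. card (Lo L J)) \<le> N"
    if I0: "I0 \<in> C" "card (Lo L I0) < 4" for I0
  proof -
    have r4: "\<forall>J\<in>C-{I0}. card (Lo L J) \<ge> 4"
    proof
      fix J assume "J \<in> C - {I0}"
      then show "card (Lo L J) \<ge> 4" using uniq[of J I0] I0 by force
    qed
    have s: "(\<Sum>I\<in>C. card (Lo L I)) = card (Lo L I0) + (\<Sum>J\<in>C-{I0}. card (Lo L J))"
      using finC I0(1) by (simp add: sum.remove)
    have "(\<Sum>J\<in>C-{I0}. card (Lo L J)) \<ge> (\<Sum>J\<in>C-{I0}. 4)" using r4 by (intro sum_mono) auto
    moreover have "card (C - {I0}) + 1 = card C" using finC I0(1)
      by (metis Suc_eq_plus1 card_Suc_Diff1)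
    ultimately have "(\<Sum>J\<in>C-{I0}. card (Lo L J)) \<ge> 4 * card C - 4" by simp
    then show ?thesis using s sumle r4 lo2[OF I0(1)] c2 by auto
  qed
  have all4: "4 * card C \<le> N" if "\<forall>I\<in>C. card (Lo L I) \<ge> 4"
  proof -
    have "(\<Sum>I\<in>C. card (Lo L I)) \<ge> (\<Sum>I\<in>C. 4)" using that by (intro sum_mono) auto
    then show ?thesis using sumle by simp
  qed
  show "4 * card C \<le> L div 2 + 2"
  proof (cases "\<forall>I\<in>C. card (Lo L I) \<ge> 4")
    case True then show ?thesis using all4 N_def by simp
  next
    case False
    then obtain I0 where "I0 \<in> C" "card (Lo L I0) < 4" by auto
    then show ?thesis using main lo2 N_def by fastforce
  qed
  show "\<not> 3 dvd L \<Longrightarrow> 4 * card C \<le> L div 2 + 1"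
  proof (cases "\<forall>I\<in>C. card (Lo L I) \<ge> 4")
    case True then show ?thesis using all4 N_def by simp
  next
    case False
    assume n3: "\<not> 3 dvd L"
    from False obtain I0 where I0: "I0 \<in> C" "card (Lo L I0) < 4" by auto
    have "card (Lo L I0) \<ge> 3"
    proof (rule ccontr)
      assume "\<not> ?thesis"
      then obtain h where "3*h = int L" using lo3[OF I0(1)] by auto
      then have "(3::int) dvd int L" by (metis dvd_triv_left)
      then show False using n3 by presburger
    qed
    then show ?thesis using main[OF I0] N_def by linarith
  qed
  show "L mod 8 = 4 \<Longrightarrow> 4 * card C \<le> L div 2 - 2"
  proof -
    assume m8: "L mod 8 = 4"
    then have N4: "N mod 4 = 2" unfolding N_def by presburger
    show ?thesis
    proof (cases "\<forall>I\<in>C. card (Lo L I) \<ge> 4")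
      case True
      then have "4 * card C \<le> N" using all4 by simp
      then show ?thesis using N4 N_def by presburger
    next
      case False
      from False obtain I0 where I0: "I0 \<in> C" "card (Lo L I0) < 4" by auto
      note mn = main[OF I0]
      show ?thesis
      proof (cases "card (Lo L I0) \<ge> 3")
        case True
        then have "4 * card C \<le> N + 1" using mn by linarith
        then show ?thesis using N4 N_def by presburger
      next
        case False
        then have c2': "card (Lo L I0) = 2" using lo2[OF I0(1)] by linarith
        show ?thesis
        proof (rule ccontr)
          assume "\<not> ?thesis"
          then have ng: "\<not> 4 * card C \<le> N - 2" using N_def by simp
          have "4 * card C \<le> N + 2" using mn c2' by simp
          then have eq: "4 * card C = N + 2" using ng N4 by presburger
          have srest: "(\<Sum>J\<in>C-{I0}. card (Lo L J)) \<le> 4 * card (C - {I0})"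
          proof -
            have "card (C - {I0}) + 1 = card C" using finC I0(1)
              by (metis Suc_eq_plus1 card_Suc_Diff1)
            then show ?thesis using mn c2' eq by linarith
          qed
          have eq4: "\<forall>J\<in>C-{I0}. card (Lo L J) = 4"
            using sum_all4[of "C - {I0}" "\<lambda>J. card (Lo L J)"] finC mn srest by auto
          have s: "(\<Sum>I\<in>C. card (Lo L I)) = card (Lo L I0) + (\<Sum>J\<in>C-{I0}. card (Lo L J))"
            using finC I0(1) by (simp add: sum.remove)
          have "(\<Sum>J\<in>C-{I0}. card (Lo L J)) = (\<Sum>J\<in>C-{I0}. 4)" using eq4 by (intro sum.cong) auto
          moreover have "card (C - {I0}) + 1 = card C" using finC I0(1)
            by (metis Suc_eq_plus1 card_Suc_Diff1)
          ultimately have "(\<Sum>I\<in>C. card (Lo L I)) = N" using s c2' eq by simp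
          then have cov: "(\<Union>I\<in>C. Lo L I) = {2..int N + 1}"
            using card_subset_eq[OF _ Usub] sumeq cardN by simp
          define U where "U = (\<Union>I\<in>C. Pp L I)"
          have cov2: "{2..int N + 1} \<subseteq> U \<union> (\<lambda>x. x+1) ` U"
          proof
            fix y assume "y \<in> {2..int N + 1}"
            then obtain I where I: "I \<in> C" "y \<in> Lo L I" using cov by blast
            then have "y \<in> Pp L I \<or> y \<in> (\<lambda>x. x+1) ` Pp L I" unfolding Lo_def by blast
            moreover have "Pp L I \<subseteq> U" using I(1) unfolding U_def by blast
            ultimately show "y \<in> U \<union> (\<lambda>x. x+1) ` U" by blast
          qed
          have Ur: "U \<subseteq> {2..int N}" using Prange unfolding U_def by blast
          obtain h0 where h0: "h0 \<in> Pp L I0" "3*h0 = int L" using lo3[OF I0(1)] c2' by auto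
          have nc: "\<forall>x\<in>U. x+1 \<notin> U"
          proof (intro ballI notI)
            fix x assume "x \<in> U" "x+1 \<in> U"
            then obtain I J where IJ: "I \<in> C" "x \<in> Pp L I" "J \<in> C" "x+1 \<in> Pp L J" unfolding U_def by blast
            show False
            proof (cases "I = J")
              case False
              then show False using sp[OF IJ(1,3) False IJ(2,4)] by simp
            next
              case True
              show False
              proof (cases "I = I0")
                case True
                then have xx: "x \<in> Pp L I0" "x+1 \<in> Pp L I0" using IJ \<open>I = J\<close> by auto
                have "x+2 = (x+1)+1" by simp
                then have "x+2 \<in> (\<lambda>a. a+1) ` Pp L I0" using xx(2) by blast
                then have "{x, x+1, x+2} \<subseteq> Lo L I0" using xx unfolding Lo_def by blast
                then have "card {x,x+1,x+2} \<le> card (Lo L I0)" using finLo[OF I0(1)] by (intro card_mono)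
                then show False using c2' by simp
              next
                case False
                then have "card (Lo L I) = 4" using eq4 IJ(1) by auto
                then obtain h where h: "h \<in> Pp L I" "3*h = int L"
                  using lo4c[OF IJ(1), of x] IJ \<open>I = J\<close> by auto
                then have "h = h0" using h0 by simp
                then show False using sp[OF I0(1) IJ(1) False[symmetric] h0(1)] h(1) by simp
              qed
            qed
          qed
          have evN: "even (int N)" using N4 by presburger
          have evU: "\<forall>x\<in>U. even x" using tiling_even[OF Ur evN nc cov2] .
          have m4e: "\<exists>e\<in>Pp L I. 4 dvd e" if IC: "I \<in> C" for I
          proof -
            obtain J where J: "J \<in> C" "J \<noteq> I" using oth[OF IC] by blast
            obtain g1 g2 g3 where g: "g1 \<ge> 2" "g2 \<ge> 2" "g3 \<ge> 2" "g1+g2+g3 = int L"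
              and P: "Pp L I = {min g1 (int L-g1), min g2 (int L-g2), min g3 (int L-g3)}"
              using structI[OF sc IC J(1) J(2)[symmetric]] by blast
            have "Pp L I \<subseteq> U" using IC unfolding U_def by blast
            then have e: "even (min g1 (int L-g1))" "even (min g2 (int L-g2))" "even (min g3 (int L-g3))"
              using evU P by auto
            have "int L mod 8 = 4" using m8 by presburger
            from m4[OF g this e] show ?thesis using P by auto
          qed
          define e where "e I = (SOME x. x \<in> Pp L I \<and> 4 dvd x)" for I
          have eP: "e I \<in> Pp L I \<and> 4 dvd e I" if "I \<in> C" for I
            unfolding e_def using m4e[OF that] by (metis (mono_tags, lifting) someI_ex)
          have inj: "inj_on e C"
          proof (rule inj_onI)
            fix I J assume "I \<in> C" "J \<in> C" "e I = e J"
            then show "I = J" using sp[of I J "e I" "e J"] eP by fastforce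
          qed
          have img: "e ` C \<subseteq> (\<lambda>k. 4*k) ` {1..(int N - 2) div 4}"
          proof
            fix y assume "y \<in> e ` C"
            then obtain I where I: "I \<in> C" "y = e I" by blast
            then have y: "y \<in> {2..int N}" "4 dvd y" using eP Prange by blast+
            then obtain k where k: "y = 4*k" by blast
            have N4i: "int N mod 4 = 2" using N4 by presburger
            have "4*k \<ge> 2" "4*k \<le> int N" using y k by auto
            then have "1 \<le> k" "k \<le> (int N - 2) div 4" using N4i by presburger+
            then have "k \<in> {1..(int N - 2) div 4}" by simp
            then show "y \<in> (\<lambda>k. 4*k) ` {1..(int N - 2) div 4}" using k by blast
          qed
          have "card C \<le> card ((\<lambda>k. 4*k) ` {1..(int N - 2) div 4})"
            using card_inj_on_le[OF inj img] by simp
          also have "\<dots> \<le> card {1..(int N - 2) div 4}" by (rule card_image_le) simp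
          also have "\<dots> = nat ((int N - 2) div 4)" by simp
          finally have "card C \<le> nat ((int N - 2) div 4)" .
          moreover have "(int N - 2) div 4 \<ge> 0" using N4 by presburger
          ultimately have "int (card C) \<le> (int N - 2) div 4" using le_nat_iff by blast
          moreover have "4 * ((int N - 2) div 4) \<le> int N - 2" by presburger
          moreover have "4 * int (card C) = int N + 2" using eq by simp
          ultimately show False by linarith
        qed
      qed
    qed
  qed
qed

lemma even_mod_iff_int: "even (L::int) \<Longrightarrow> even (b mod L) \<longleftrightarrow> even b"
  by (simp add: dvd_mod_iff)

lemma scac_even:
  assumes ev: "even L" and sub: "C \<subseteq> Pset L 3"
    and evd: "\<forall>I\<in>C. \<forall>a\<in>dset L I. even a"
    and dj: "\<forall>I\<in>C. \<forall>J\<in>C. I \<noteq> J \<longrightarrow> dstar L I \<inter> dstar L J = {}"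
  shows "is_SCAC L 3 C"
  unfolding is_SCAC_def
proof (intro conjI sub ballI impI)
  fix I J assume IJ: "I \<in> C" "J \<in> C" "I \<noteq> J"
  have evL: "even (int L)" using ev by simp
  show "(dstar L I \<union> shiftL L 1 (dstar L I) \<union> shiftL L (- 1) (dstar L I)) \<inter> dset L J = {}"
  proof (rule ccontr)
    assume "\<not> ?thesis"
    then obtain x where x: "x \<in> dset L J" "x \<in> dstar L I \<or> x \<in> shiftL L 1 (dstar L I) \<or> x \<in> shiftL L (-1) (dstar L I)"
      by blast
    have evx: "even x" using evd IJ(2) x(1) by blast
    from x(2) show False
    proof (elim disjE)
      assume "x \<in> dstar L I"
      then have "x \<in> dstar L J" using x(1) unfolding dstar_def by auto
      then show False using dj IJ \<open>x \<in> dstar L I\<close> by blast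
    next
      assume "x \<in> shiftL L 1 (dstar L I)"
      then obtain a where a: "a \<in> dstar L I" "x = (a + 1) mod int L" unfolding shiftL_def by auto
      have "even a" using evd IJ(1) a(1) unfolding dstar_def by blast
      then have "odd x" using a(2) even_mod_iff_int[OF evL, of "a+1"] by simp
      then show False using evx by simp
    next
      assume "x \<in> shiftL L (-1) (dstar L I)"
      then obtain a where a: "a \<in> dstar L I" "x = (a + -1) mod int L" unfolding shiftL_def by auto
      have "even a" using evd IJ(1) a(1) unfolding dstar_def by blast
      then have "odd x" using a(2) even_mod_iff_int[OF evL, of "a + -1"] by simp
      then show False using evx by simp
    qed
  qed
qed

definition cw :: "int \<Rightarrow> int set" where "cw u = {0, 2*u, 4*u}"

lemma cw_P: "0 < u \<Longrightarrow> 4*u < int L \<Longrightarrow> cw u \<in> Pset L 3"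
  unfolding cw_def Pset_def by auto

lemma cw_dset: "0 < u \<Longrightarrow> 4*u < int L \<Longrightarrow> dset L (cw u) = {0, 2*u, 4*u, int L - 2*u, int L - 4*u}"
  unfolding cw_def using dset3[of 0 "2*u" "4*u" L] by auto

lemma cw_dstar: "0 < u \<Longrightarrow> 4*u < int L \<Longrightarrow> dstar L (cw u) = {2*u, 4*u, int L - 2*u, int L - 4*u}"
  unfolding dstar_def using cw_dset[of u L] by auto

lemma cw_even: "even L \<Longrightarrow> 0 < u \<Longrightarrow> 4*u < int L \<Longrightarrow> \<forall>a\<in>dset L (cw u). even a"
  using cw_dset[of u L] by auto

lemma cw_inj: "0 < u \<Longrightarrow> 0 < v \<Longrightarrow> cw u = cw v \<Longrightarrow> u = v"
proof -
  assume a: "0 < u" "0 < v" "cw u = cw v"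
  have "4*u \<in> cw u" "4*v \<in> cw v" unfolding cw_def by auto
  then have "4*u \<in> cw v" "4*v \<in> cw u" using a(3) by auto
  then have "4*u = 2*v \<or> 4*u = 4*v" "4*v = 2*u \<or> 4*v = 4*u" using a(1,2) unfolding cw_def by auto
  then show "u = v" using a(1,2) by auto
qed

lemma cw_inter:
  assumes "0 < u" "4*u < int L" "0 < v" "4*v < int L" "dstar L (cw u) \<inter> dstar L (cw v) \<noteq> {}"
  shows "2*u = 2*v \<or> 2*u = 4*v \<or> 2*u = int L - 2*v \<or> 2*u = int L - 4*v \<or>
         4*u = 2*v \<or> 4*u = 4*v \<or> 4*u = int L - 2*v \<or> 4*u = int L - 4*v \<or>
         int L - 2*u = 2*v \<or> int L - 2*u = 4*v \<or> int L - 2*u = int L - 2*v \<or> int L - 2*u = int L - 4*v \<or>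
         int L - 4*u = 2*v \<or> int L - 4*u = 4*v \<or> int L - 4*u = int L - 2*v \<or> int L - 4*u = int L - 4*v"
  using assms(5) unfolding cw_dstar[OF assms(1,2)] cw_dstar[OF assms(3,4)] by auto

lemma parA: "2*(a::int)+1 \<noteq> 2*b" by presburger
lemma parB: "4*(a::int)+2 \<noteq> 4*b" by presburger
lemma parC: "8*(a::int)+4 \<noteq> 8*b" by presburger

lemma c1_neq:
  fixes k j K Li :: int
  assumes l: "Li = 8*K+4" and b: "0 \<le> k" "k < K" "0 \<le> j" "j < K" and ne: "k \<noteq> j"
  shows "\<not> (2*(2*k+1) = 2*(2*j+1) \<or> 2*(2*k+1) = 4*(2*j+1) \<or> 2*(2*k+1) = Li - 2*(2*j+1) \<or> 2*(2*k+1) = Li - 4*(2*j+1) \<or> 4*(2*k+1) = 2*(2*j+1) \<or> 4*(2*k+1) = 4*(2*j+1) \<or> 4*(2*k+1) = Li - 2*(2*j+1) \<or> 4*(2*k+1) = Li - 4*(2*j+1) \<or> Li - 2*(2*k+1) = 2*(2*j+1) \<or> Li - 2*(2*k+1) = 4*(2*j+1) \<or> Li - 2*(2*k+1) = Li - 2*(2*j+1) \<or> Li - 2*(2*k+1) = Li - 4*(2*j+1) \<or> Li - 4*(2*k+1) = 2*(2*j+1) \<or> Li - 4*(2*k+1) = 4*(2*j+1) \<or> Li - 4*(2*k+1) = Li - 2*(2*j+1) \<or> Li - 4*(2*k+1) = Li - 4*(2*j+1))"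
proof
  assume "2*(2*k+1) = 2*(2*j+1) \<or> 2*(2*k+1) = 4*(2*j+1) \<or> 2*(2*k+1) = Li - 2*(2*j+1) \<or> 2*(2*k+1) = Li - 4*(2*j+1) \<or> 4*(2*k+1) = 2*(2*j+1) \<or> 4*(2*k+1) = 4*(2*j+1) \<or> 4*(2*k+1) = Li - 2*(2*j+1) \<or> 4*(2*k+1) = Li - 4*(2*j+1) \<or> Li - 2*(2*k+1) = 2*(2*j+1) \<or> Li - 2*(2*k+1) = 4*(2*j+1) \<or> Li - 2*(2*k+1) = Li - 2*(2*j+1) \<or> Li - 2*(2*k+1) = Li - 4*(2*j+1) \<or> Li - 4*(2*k+1) = 2*(2*j+1) \<or> Li - 4*(2*k+1) = 4*(2*j+1) \<or> Li - 4*(2*k+1) = Li - 2*(2*j+1) \<or> Li - 4*(2*k+1) = Li - 4*(2*j+1)"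
  then show False
  proof (elim disjE)
    assume h: "2*(2*k+1) = 2*(2*j+1)"
    then have "k = j" by simp
    then show False using ne by simp
  next
    assume h: "2*(2*k+1) = 4*(2*j+1)"
    then have "4*k+2 = 4*(2*j+1)" using l by smt
    then show False using parB[of k "2*j+1"] by blast
  next
    assume h: "2*(2*k+1) = Li - 2*(2*j+1)"
    then show False using l b by smt
  next
    assume h: "2*(2*k+1) = Li - 4*(2*j+1)"
    then have "4*k+2 = 4*(2*K-2*j)" using l by smt
    then show False using parB[of k "2*K-2*j"] by blast
  next
    assume h: "4*(2*k+1) = 2*(2*j+1)"
    then have "4*j+2 = 4*(2*k+1)" using l by smt
    then show False using parB[of j "2*k+1"] by blast
  next
    assume h: "4*(2*k+1) = 4*(2*j+1)"
    then have "k = j" by simp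
    then show False using ne by simp
  next
    assume h: "4*(2*k+1) = Li - 2*(2*j+1)"
    then have "4*(2*k+j)+2 = 4*(2*K)" using l by smt
    then show False using parB[of "2*k+j" "2*K"] by blast
  next
    assume h: "4*(2*k+1) = Li - 4*(2*j+1)"
    then have "8*(k+j)+4 = 8*K" using l by smt
    then show False using parC[of "k+j" K] by blast
  next
    assume h: "Li - 2*(2*k+1) = 2*(2*j+1)"
    then show False using l b by smt
  next
    assume h: "Li - 2*(2*k+1) = 4*(2*j+1)"
    then have "4*(2*j+k)+2 = 4*(2*K)" using l by smt
    then show False using parB[of "2*j+k" "2*K"] by blast
  next
    assume h: "Li - 2*(2*k+1) = Li - 2*(2*j+1)"
    then have "k = j" by simp
    then show False using ne by simp
  next
    assume h: "Li - 2*(2*k+1) = Li - 4*(2*j+1)"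
    then have "4*k+2 = 4*(2*j+1)" using l by smt
    then show False using parB[of k "2*j+1"] by blast
  next
    assume h: "Li - 4*(2*k+1) = 2*(2*j+1)"
    then have "4*j+2 = 4*(2*K-2*k)" using l by smt
    then show False using parB[of j "2*K-2*k"] by blast
  next
    assume h: "Li - 4*(2*k+1) = 4*(2*j+1)"
    then have "8*j+4 = 8*(K-k)" using l by smt
    then show False using parC[of j "K-k"] by blast
  next
    assume h: "Li - 4*(2*k+1) = Li - 2*(2*j+1)"
    then have "4*j+2 = 4*(2*k+1)" using l by smt
    then show False using parB[of j "2*k+1"] by blast
  next
    assume h: "Li - 4*(2*k+1) = Li - 4*(2*j+1)"
    then have "k = j" by simp
    then show False using ne by simp
  qed
qed

lemma C1:
  assumes m8: "L mod 8 = 4"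
  shows "\<exists>C. is_SCAC L 3 C \<and> card C = (L - 4) div 8"
proof -
  define K where "K = int ((L - 4) div 8)"
  have LK: "int L = 8*K + 4" unfolding K_def using m8 by presburger
  define C where "C = (\<lambda>k. cw (2*k+1)) ` {0..<K}"
  have inj: "inj_on (\<lambda>k. cw (2*k+1)) {0..<K}"
  proof (rule inj_onI)
    fix k j assume "k \<in> {0..<K}" "j \<in> {0..<K}" "cw (2*k+1) = cw (2*j+1)"
    then have "2*k+1 = 2*j+1" by (intro cw_inj) auto
    then show "k = j" by simp
  qed
  have card: "card C = (L - 4) div 8" unfolding C_def using card_image[OF inj] K_def by simp
  have bnd: "0 < 2*k+1 \<and> 4*(2*k+1) < int L" if "k \<in> {0..<K}" for k using that LK by auto
  have sc: "is_SCAC L 3 C"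
  proof (rule scac_even)
    show "even L" using m8 by presburger
    show "C \<subseteq> Pset L 3" unfolding C_def using bnd cw_P by blast
    show "\<forall>I\<in>C. \<forall>a\<in>dset L I. even a" unfolding C_def using bnd cw_even \<open>even L\<close> by blast
    show "\<forall>I\<in>C. \<forall>J\<in>C. I \<noteq> J \<longrightarrow> dstar L I \<inter> dstar L J = {}"
    proof (intro ballI impI)
      fix I J assume "I \<in> C" "J \<in> C" "I \<noteq> J"
      obtain k where k: "k \<in> {0..<K}" "I = cw (2*k+1)" using \<open>I \<in> C\<close> unfolding C_def by blast
      obtain j where j: "j \<in> {0..<K}" "J = cw (2*j+1)" using \<open>J \<in> C\<close> unfolding C_def by blast
      have kj0: "k \<in> {0..<K}" "j \<in> {0..<K}" "I = cw (2*k+1)" "J = cw (2*j+1)" using k j by auto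
      then have kj: "k \<in> {0..<K}" "j \<in> {0..<K}" "I = cw (2*k+1)" "J = cw (2*j+1)" "k \<noteq> j"
        using \<open>I \<noteq> J\<close> by auto
      show "dstar L I \<inter> dstar L J = {}"
      proof (rule ccontr)
        assume "dstar L I \<inter> dstar L J \<noteq> {}"
        from cw_inter[of "2*k+1" L "2*j+1"] this bnd[OF kj(1)] bnd[OF kj(2)] kj(3,4)
        have e: "2*(2*k+1) = 2*(2*j+1) \<or> 2*(2*k+1) = 4*(2*j+1) \<or> 2*(2*k+1) = int L - 2*(2*j+1) \<or> 2*(2*k+1) = int L - 4*(2*j+1) \<or>
         4*(2*k+1) = 2*(2*j+1) \<or> 4*(2*k+1) = 4*(2*j+1) \<or> 4*(2*k+1) = int L - 2*(2*j+1) \<or> 4*(2*k+1) = int L - 4*(2*j+1) \<or>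
         int L - 2*(2*k+1) = 2*(2*j+1) \<or> int L - 2*(2*k+1) = 4*(2*j+1) \<or> int L - 2*(2*k+1) = int L - 2*(2*j+1) \<or> int L - 2*(2*k+1) = int L - 4*(2*j+1) \<or>
         int L - 4*(2*k+1) = 2*(2*j+1) \<or> int L - 4*(2*k+1) = 4*(2*j+1) \<or> int L - 4*(2*k+1) = int L - 2*(2*j+1) \<or> int L - 4*(2*k+1) = int L - 4*(2*j+1)"
          by blast
        have kb: "0 \<le> k" "k < K" "0 \<le> j" "j < K" "k \<noteq> j" using kj by auto
        show False using e c1_neq[OF LK kb] by blast
      qed
    qed
  qed
  show ?thesis using sc card by blast
qed

lemma dvd_mod_diff: "(n::int) dvd (a mod n - a)"
  by (metis mod_eq_dvd_iff mod_mod_trivial)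
lemma dvd_mod_diff': "(n::int) dvd (a - a mod n)"
  by (metis mod_eq_dvd_iff mod_mod_trivial)
lemma dvd_mod_neg: "(n::int) dvd ((-x) mod n + x)"
  using dvd_mod_diff[of n "-x"] by simp

lemma coloring:
  fixes n :: int and X :: "int set"
  assumes K: "K \<ge> 1" "n dvd (2^K - 1)"
    and X2: "\<forall>x\<in>X. (2*x) mod n \<in> X" and Xn: "\<forall>x\<in>X. (-x) mod n \<in> X"
    and cons: "\<forall>x\<in>X. \<forall>j. (n dvd (2^j*x - x) \<or> n dvd (2^j*x + x)) \<longrightarrow> even j"
  shows "\<exists>f. \<forall>x\<in>X. f ((2*x) mod n) = (\<not> f x) \<and> f ((-x) mod n) = f x"
proof -
  define R where "R y x \<longleftrightarrow> (\<exists>j::nat. n dvd (x - 2^j*y) \<or> n dvd (x + 2^j*y))" for y x :: int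
  have R2: "R y ((2*x) mod n) \<longleftrightarrow> R y x" for y x
  proof
    assume "R y x"
    then obtain j where j: "n dvd (x - 2^j*y) \<or> n dvd (x + 2^j*y)" unfolding R_def by blast
    have m: "n dvd ((2*x) mod n - 2*x)" by (rule dvd_mod_diff)
    from j have "n dvd ((2*x) mod n - 2^(Suc j)*y) \<or> n dvd ((2*x) mod n + 2^(Suc j)*y)"
    proof
      assume a: "n dvd (x - 2^j*y)"
      have "n dvd ((2*x) mod n - 2*x + 2*(x - 2^j*y))" by (rule dvd_add[OF m dvd_mult[OF a]])
      then show ?thesis by (simp add: algebra_simps)
    next
      assume a: "n dvd (x + 2^j*y)"
      have "n dvd ((2*x) mod n - 2*x + 2*(x + 2^j*y))" by (rule dvd_add[OF m dvd_mult[OF a]])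
      then show ?thesis by (simp add: algebra_simps)
    qed
    then show "R y ((2*x) mod n)" unfolding R_def by blast
  next
    assume "R y ((2*x) mod n)"
    then obtain j where j: "n dvd ((2*x) mod n - 2^j*y) \<or> n dvd ((2*x) mod n + 2^j*y)" unfolding R_def by blast
    have m: "n dvd (2*x - (2*x) mod n)" by (rule dvd_mod_diff')
    have kx: "n dvd (x - 2^K * x)"
    proof -
      have "n dvd (2^K - 1) * x" using K(2) by simp
      then have "n dvd - ((2^K - 1) * x)" by simp
      then show ?thesis by (simp add: algebra_simps)
    qed
    obtain K' where K': "K = Suc K'" using K(1) by (cases K) auto
    from j have "n dvd (x - 2^(K'+j)*y) \<or> n dvd (x + 2^(K'+j)*y)"
    proof
      assume a: "n dvd ((2*x) mod n - 2^j*y)"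
      have "n dvd (x - 2^K*x) + 2^K'*((2*x - (2*x) mod n) + ((2*x) mod n - 2^j*y))"
        by (rule dvd_add[OF kx dvd_mult[OF dvd_add[OF m a]]])
      then show ?thesis unfolding K' by (simp add: algebra_simps power_add)
    next
      assume a: "n dvd ((2*x) mod n + 2^j*y)"
      have "n dvd (x - 2^K*x) + 2^K'*((2*x - (2*x) mod n) + ((2*x) mod n + 2^j*y))"
        by (rule dvd_add[OF kx dvd_mult[OF dvd_add[OF m a]]])
      then show ?thesis unfolding K' by (simp add: algebra_simps power_add)
    qed
    then show "R y x" unfolding R_def by blast
  qed
  have Rn: "R y ((-x) mod n) \<longleftrightarrow> R y x" for y x
  proof -
    have m: "n dvd ((-x) mod n + x)" by (rule dvd_mod_neg)
    have "n dvd ((-x) mod n - 2^j*y) \<longleftrightarrow> n dvd (x + 2^j*y)" for j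
    proof -
      have eq: "(-x) mod n - 2^j*y = ((-x) mod n + x) + (-(x + 2^j*y))" by simp
      have "n dvd ((-x) mod n - 2^j*y) \<longleftrightarrow> n dvd (((-x) mod n + x) + (-(x + 2^j*y)))"
        by (simp only: eq)
      also have "\<dots> \<longleftrightarrow> n dvd (-(x + 2^j*y))" by (rule dvd_add_right_iff[OF m])
      also have "\<dots> \<longleftrightarrow> n dvd (x + 2^j*y)" by (rule dvd_minus_iff)
      finally show ?thesis .
    qed
    moreover have "n dvd ((-x) mod n + 2^j*y) \<longleftrightarrow> n dvd (x - 2^j*y)" for j
    proof -
      have eq: "(-x) mod n + 2^j*y = ((-x) mod n + x) + (-(x - 2^j*y))" by simp
      have "n dvd ((-x) mod n + 2^j*y) \<longleftrightarrow> n dvd (((-x) mod n + x) + (-(x - 2^j*y)))"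
        by (simp only: eq)
      also have "\<dots> \<longleftrightarrow> n dvd (-(x - 2^j*y))" by (rule dvd_add_right_iff[OF m])
      also have "\<dots> \<longleftrightarrow> n dvd (x - 2^j*y)" by (rule dvd_minus_iff)
      finally show ?thesis .
    qed
    ultimately show ?thesis unfolding R_def by blast
  qed
  define rep where "rep x = (SOME y. R y x)" for x
  have rep2: "rep ((2*x) mod n) = rep x" for x unfolding rep_def using R2 by simp
  have repn: "rep ((-x) mod n) = rep x" for x unfolding rep_def using Rn by simp
  have Rrep: "R (rep x) x" for x
  proof -
    have "R x x" unfolding R_def by (rule exI[of _ 0]) simp
    then show ?thesis unfolding rep_def by (rule someI)
  qed
  define Q where "Q x j \<longleftrightarrow> n dvd (x - 2^j*rep x) \<or> n dvd (x + 2^j*rep x)" for x j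
  define jx where "jx x = (SOME j. Q x j)" for x
  have Qjx: "Q x (jx x)" for x
  proof -
    have "\<exists>j. Q x j" using Rrep[of x] unfolding Q_def R_def by blast
    then show ?thesis unfolding jx_def by (rule someI_ex)
  qed
  have par: "even j1 = even j2" if x: "x \<in> X" and q: "Q x j1" "Q x j2" for x j1 j2
  proof -
    have gen: "even (j2 - j1)" if le: "j1 \<le> j2" and q1: "Q x j1" and q2: "Q x j2" for j1 j2
    proof -
      define d where "d = j2 - j1"
      define A where "A = 2^j1 * rep x"
      have j2e: "2^j2 * rep x = 2^d * A" unfolding A_def d_def using le by (simp add: power_add[symmetric])
      have "n dvd (2^d*x - x) \<or> n dvd (2^d*x + x)"
      proof -
        from q1 have "n dvd (x - A) \<or> n dvd (x + A)" unfolding Q_def A_def .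
        moreover from q2 have "n dvd (x - 2^d*A) \<or> n dvd (x + 2^d*A)" unfolding Q_def j2e .
        ultimately show ?thesis
        proof (elim disjE)
          assume a: "n dvd (x - A)" and b: "n dvd (x - 2^d*A)"
          have "n dvd (2^d*(x - A) - (x - 2^d*A))" by (rule dvd_diff[OF dvd_mult[OF a] b])
          then show ?thesis by (simp add: algebra_simps)
        next
          assume a: "n dvd (x - A)" and b: "n dvd (x + 2^d*A)"
          have "n dvd (2^d*(x - A) + (x + 2^d*A))" by (rule dvd_add[OF dvd_mult[OF a] b])
          then show ?thesis by (simp add: algebra_simps)
        next
          assume a: "n dvd (x + A)" and b: "n dvd (x - 2^d*A)"
          have "n dvd (2^d*(x + A) + (x - 2^d*A))" by (rule dvd_add[OF dvd_mult[OF a] b])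
          then show ?thesis by (simp add: algebra_simps)
        next
          assume a: "n dvd (x + A)" and b: "n dvd (x + 2^d*A)"
          have "n dvd (2^d*(x + A) - (x + 2^d*A))" by (rule dvd_diff[OF dvd_mult[OF a] b])
          then show ?thesis by (simp add: algebra_simps)
        qed
      qed
      then show ?thesis using cons x unfolding d_def by blast
    qed
    show ?thesis
    proof (cases "j1 \<le> j2")
      case True then show ?thesis using gen[OF True q] by auto
    next
      case False then show ?thesis using gen[of j2 j1] q by auto
    qed
  qed
  define f where "f x = even (jx x)" for x
  show ?thesis
  proof (rule exI[of _ f], intro ballI conjI)
    fix x assume x: "x \<in> X"
    have q: "Q x (jx x)" by (rule Qjx)
    have "Q ((2*x) mod n) (Suc (jx x))"
    proof -
      have m: "n dvd ((2*x) mod n - 2*x)" by (rule dvd_mod_diff)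
      from q show ?thesis unfolding Q_def rep2
      proof
        assume a: "n dvd (x - 2^jx x*rep x)"
        have "n dvd ((2*x) mod n - 2*x + 2*(x - 2^jx x*rep x))" by (rule dvd_add[OF m dvd_mult[OF a]])
        then show "n dvd ((2*x) mod n - 2^Suc (jx x)*rep x) \<or> n dvd ((2*x) mod n + 2^Suc (jx x)*rep x)"
          by (simp add: algebra_simps)
      next
        assume a: "n dvd (x + 2^jx x*rep x)"
        have "n dvd ((2*x) mod n - 2*x + 2*(x + 2^jx x*rep x))" by (rule dvd_add[OF m dvd_mult[OF a]])
        then show "n dvd ((2*x) mod n - 2^Suc (jx x)*rep x) \<or> n dvd ((2*x) mod n + 2^Suc (jx x)*rep x)"
          by (simp add: algebra_simps)
      qed
    qed
    then have "even (jx ((2*x) mod n)) = even (Suc (jx x))"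
      using par[OF _ Qjx] X2 x by blast
    then show "f ((2*x) mod n) = (\<not> f x)" unfolding f_def by simp
    have "Q ((-x) mod n) (jx x)"
    proof -
      have m: "n dvd ((-x) mod n + x)" by (rule dvd_mod_neg)
      from q show ?thesis unfolding Q_def repn
      proof
        assume a: "n dvd (x - 2^jx x*rep x)"
        have "n dvd (((-x) mod n + x) - (x - 2^jx x*rep x))" by (rule dvd_diff[OF m a])
        then show "n dvd ((-x) mod n - 2^jx x*rep x) \<or> n dvd ((-x) mod n + 2^jx x*rep x)"
          by (simp add: algebra_simps)
      next
        assume a: "n dvd (x + 2^jx x*rep x)"
        have "n dvd (((-x) mod n + x) - (x + 2^jx x*rep x))" by (rule dvd_diff[OF m a])
        then show "n dvd ((-x) mod n - 2^jx x*rep x) \<or> n dvd ((-x) mod n + 2^jx x*rep x)"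
          by (simp add: algebra_simps)
      qed
    qed
    then have "even (jx ((-x) mod n)) = even (jx x)"
      using par[OF _ Qjx] Xn x by blast
    then show "f ((-x) mod n) = f x" unfolding f_def by simp
  qed
qed

lemma small_dvd: "0 < (n::int) \<Longrightarrow> -n < a \<Longrightarrow> a < n \<Longrightarrow> n dvd a \<Longrightarrow> a = 0"
  using dvd_imp_le_int[of a n] by fastforce

lemma odd_dvd_2: "odd (n::int) \<Longrightarrow> n dvd 2*a \<Longrightarrow> n dvd a"
proof -
  assume "odd n" "n dvd 2*a"
  then have "coprime n 2" by (simp add: coprime_commute)
  then show "n dvd a" using \<open>n dvd 2*a\<close> by (metis coprime_dvd_mult_right_iff)
qed

lemma color_count:
  fixes n :: int and X :: "int set" and f :: "int \<Rightarrow> bool"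
  assumes odd: "odd n" and n1: "n > 1" and Xr: "X \<subseteq> {1..n-1}"
    and X2: "\<forall>x\<in>X. (2*x) mod n \<in> X" and Xn: "\<forall>x\<in>X. (-x) mod n \<in> X"
    and f2: "\<forall>x\<in>X. f ((2*x) mod n) = (\<not> f x)" and fn: "\<forall>x\<in>X. f ((-x) mod n) = f x"
  shows "4 * card {u\<in>X. 2*u < n \<and> f u} = card X"
proof -
  have finX: "finite X" using Xr by (rule finite_subset) simp
  define X0 where "X0 = {x\<in>X. f x}"
  define X1 where "X1 = {x\<in>X. \<not> f x}"
  define d where "d x = (2*x) mod n" for x
  have injd: "inj_on d A" if "A \<subseteq> X" for A
  proof (rule inj_onI)
    fix x y assume xy: "x \<in> A" "y \<in> A" "d x = d y"
    then have "n dvd 2*x - 2*y" unfolding d_def by (simp add: mod_eq_dvd_iff)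
    then have "n dvd 2*(x - y)" by (simp add: algebra_simps)
    then have "n dvd (x - y)" using odd_dvd_2[OF odd] by blast
    moreover have "x \<in> X" "y \<in> X" using xy(1,2) that by auto
    then have "1 \<le> x" "x \<le> n-1" "1 \<le> y" "y \<le> n-1" using Xr by auto
    then have "-n < x - y" "x - y < n" by linarith+
    ultimately show "x = y" using small_dvd[of n "x-y"] n1 by simp
  qed
  have "card X0 \<le> card X1"
    by (rule card_inj_on_le[OF injd]) (auto simp: X0_def X1_def d_def X2 f2 finX)
  moreover have "card X1 \<le> card X0"
    by (rule card_inj_on_le[OF injd]) (auto simp: X0_def X1_def d_def X2 f2 finX)
  moreover have "card X = card X0 + card X1"
  proof -
    have "X = X0 \<union> X1" "X0 \<inter> X1 = {}" unfolding X0_def X1_def by auto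
    then show ?thesis using finX by (simp add: card_Un_disjoint)
  qed
  ultimately have cX: "card X = 2 * card X0" by simp
  define U where "U = {u\<in>X. 2*u < n \<and> f u}"
  define V where "V = {u\<in>X. 2*u > n \<and> f u}"
  have negv: "(-x) mod n = n - x" if "x \<in> X" for x
  proof -
    have "(-x) mod n = (n - x) mod n" by (metis add.commute diff_conv_add_uminus mod_add_self2)
    also have "\<dots> = n - x" using that Xr by (intro mod_pos_pos_trivial) auto
    finally show ?thesis .
  qed
  have "card U \<le> card V"
  proof (rule card_inj_on_le[of "\<lambda>x. n - x"])
    show "inj_on (\<lambda>x. n - x) U" by (rule inj_onI) simp
    show "(\<lambda>x. n - x) ` U \<subseteq> V"
    proof
      fix y assume "y \<in> (\<lambda>x. n - x) ` U"
      then obtain x where x: "x \<in> U" "y = n - x" by blast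
      then have "x \<in> X" "f x" "2*x < n" unfolding U_def by auto
      then show "y \<in> V" unfolding V_def using Xn fn negv x(2) by force
    qed
    show "finite V" using finX unfolding V_def by simp
  qed
  moreover have "card V \<le> card U"
  proof (rule card_inj_on_le[of "\<lambda>x. n - x"])
    show "inj_on (\<lambda>x. n - x) V" by (rule inj_onI) simp
    show "(\<lambda>x. n - x) ` V \<subseteq> U"
    proof
      fix y assume "y \<in> (\<lambda>x. n - x) ` V"
      then obtain x where x: "x \<in> V" "y = n - x" by blast
      then have "x \<in> X" "f x" "2*x > n" unfolding V_def by auto
      then show "y \<in> U" unfolding U_def using Xn fn negv x(2) by force
    qed
    show "finite U" using finX unfolding U_def by simp
  qed
  moreover have "card X0 = card U + card V"
  proof -
    have ne: "2*x \<noteq> n" for x using odd by presburger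
    have "X0 = U \<union> V"
    proof
      show "X0 \<subseteq> U \<union> V"
      proof
        fix x assume "x \<in> X0"
        moreover have "2*x < n \<or> 2*x > n" using ne[of x] by linarith
        ultimately show "x \<in> U \<union> V" unfolding X0_def U_def V_def by auto
      qed
      show "U \<union> V \<subseteq> X0" unfolding X0_def U_def V_def by auto
    qed
    moreover have "U \<inter> V = {}" unfolding U_def V_def by auto
    ultimately show ?thesis using finX unfolding U_def V_def by (simp add: card_Un_disjoint)
  qed
  ultimately show ?thesis using cX unfolding U_def by simp
qed

lemma Gmul:
  fixes N x :: int
  assumes "N dvd (2^b*x - x)"
  shows "N dvd (2^(b*q)*x - x)"
proof (induction q)
  case 0 then show ?case by simp
next
  case (Suc q)
  have "2^(b*Suc q)*x - x = 2^b*(2^(b*q)*x - x) + (2^b*x - x)"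
    by (simp add: algebra_simps power_add)
  then show ?case using Suc assms by (metis dvd_add dvd_mult)
qed

lemma Ggcd:
  fixes N x :: int
  shows "N dvd (2^a*x - x) \<Longrightarrow> N dvd (2^b*x - x) \<Longrightarrow> N dvd (2^(gcd a b)*x - x)"
proof (induction a b rule: gcd_nat_induct)
  case (step a b)
  have "N dvd (2^(a mod b)*x - x)"
  proof -
    have a: "a = b*(a div b) + a mod b" by simp
    have m: "N dvd (2^(b*(a div b))*x - x)" by (rule Gmul[OF step(4)])
    have p0: "(2::int)^a = 2^(b*(a div b) + a mod b)" using a by metis
    have p: "(2::int)^a = 2^(a mod b) * 2^(b*(a div b))" unfolding p0 power_add by (rule mult.commute)
    have "2^a*x - x = 2^(a mod b)*(2^(b*(a div b))*x - x) + (2^(a mod b)*x - x)"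
      by (simp add: p algebra_simps)
    then show ?thesis using step(3) m by (metis dvd_add_right_iff dvd_mult)
  qed
  then show ?case using step by (simp add: gcd_non_0_nat)
qed simp

lemma cw_inter2:
  assumes L: "int L = 2*n" and odd: "odd n" and u: "0 < u" "2*u < n" and v: "0 < v" "2*v < n"
    and ne: "dstar L (cw u) \<inter> dstar L (cw v) \<noteq> {}"
  shows "u = v \<or> u = 2*v \<or> u = n - 2*v \<or> v = 2*u \<or> v = n - 2*u"
proof -
  have b: "4*u < int L" "4*v < int L" using L u v by auto
  note E = cw_inter[OF u(1) b(1) v(1) b(2) ne]
  have p1: "4*u \<noteq> int L - 4*v"
  proof
    assume "4*u = int L - 4*v"
    then have "2*n = 4*u + 4*v" using L by linarith
    then show False using odd by presburger
  qed
  have p2: "int L - 4*u \<noteq> 4*v" using p1 by linarith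
  have p3: "2*u \<noteq> int L - 2*v" using L u v by linarith
  have p4: "int L - 2*u \<noteq> 2*v" using L u v by linarith
  from E show ?thesis
  proof (elim disjE)
  qed (use p1 p2 p3 p4 L in auto)+
qed

lemma code_good:
  fixes N :: int and W :: "int set" and L :: nat
  assumes L: "int L = 2*N" and odd: "odd N" and W: "W \<subseteq> {u. 0 < u \<and> 2*u < N}"
    and good: "\<forall>u\<in>W. \<forall>v\<in>W. u \<noteq> v \<longrightarrow> u \<noteq> 2*v \<and> u \<noteq> N - 2*v"
  shows "is_SCAC L 3 (cw ` W) \<and> card (cw ` W) = card W"
proof
  have bnd: "0 < u \<and> 4*u < int L" if "u \<in> W" for u using W that L by auto
  have inj: "inj_on cw W" using cw_inj bnd by (meson inj_onI)
  show "card (cw ` W) = card W" using card_image[OF inj] .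
  show "is_SCAC L 3 (cw ` W)"
  proof (rule scac_even)
    show evL: "even L" using L by presburger
    show "cw ` W \<subseteq> Pset L 3" using bnd cw_P by blast
    show "\<forall>I\<in>cw ` W. \<forall>a\<in>dset L I. even a" using bnd cw_even evL by blast
    show "\<forall>I\<in>cw ` W. \<forall>J\<in>cw ` W. I \<noteq> J \<longrightarrow> dstar L I \<inter> dstar L J = {}"
    proof (intro ballI impI)
      fix I J assume IJ: "I \<in> cw ` W" "J \<in> cw ` W" "I \<noteq> J"
      then obtain u v where uv: "u \<in> W" "v \<in> W" "I = cw u" "J = cw v" by blast
      then have ne: "u \<noteq> v" using IJ(3) by auto
      show "dstar L I \<inter> dstar L J = {}"
      proof (rule ccontr)
        assume "dstar L I \<inter> dstar L J \<noteq> {}"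
        then have "u = v \<or> u = 2*v \<or> u = N - 2*v \<or> v = 2*u \<or> v = N - 2*u"
          using cw_inter2[OF L odd, of u v] uv W by auto
        then show False using good uv(1,2) ne by metis
      qed
    qed
  qed
qed

lemma X_props:
  fixes N :: int
  assumes N1: "N > 1" and odd: "odd N" and x: "1 \<le> x" "x \<le> N - 1"
  shows "(2*x) mod N \<ge> 0" "(2*x) mod N < N" "N dvd (2*x) mod N - 2*x" "(-x) mod N = N - x"
proof -
  show "(2*x) mod N \<ge> 0" "(2*x) mod N < N" using N1 by auto
  show "N dvd (2*x) mod N - 2*x" by (rule dvd_mod_diff)
  have "(-x) mod N = (N - x) mod N" by (metis add.commute diff_conv_add_uminus mod_add_self2)
  also have "\<dots> = N - x" using x by (intro mod_pos_pos_trivial) auto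
  finally show "(-x) mod N = N - x" .
qed

lemma C2:
  fixes n k :: nat
  assumes odd: "odd n" and n1: "n > 1" and ek: "even k" and k2: "k \<ge> 2" and dk: "int n dvd 2^k + 1"
  shows "\<exists>C. is_SCAC (2*n) 3 C \<and> 4 * card C = n - 1"
proof -
  define N where "N = int n"
  have oN: "odd N" and N1: "N > 1" using odd n1 unfolding N_def by auto
  define X where "X = {1..N-1}"
  have nd: "\<not> N dvd x" if "x \<in> X" for x
    using small_dvd[of N x] that N1 unfolding X_def by auto
  have X2: "\<forall>x\<in>X. (2*x) mod N \<in> X"
  proof
    fix x assume x: "x \<in> X"
    have xb: "1 \<le> x" "x \<le> N-1" using x unfolding X_def by auto
    note p = X_props[OF N1 oN xb]
    have "(2*x) mod N \<noteq> 0"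
    proof
      assume "(2*x) mod N = 0"
      then have "N dvd 2*x" by auto
      then show False using odd_dvd_2[OF oN] nd[OF x] by blast
    qed
    moreover have "0 \<le> (2*x) mod N" "(2*x) mod N < N" using N1 by auto
    ultimately have "1 \<le> (2*x) mod N" "(2*x) mod N \<le> N - 1" by linarith+
    then show "(2*x) mod N \<in> X" unfolding X_def by auto
  qed
  have Xn: "\<forall>x\<in>X. (-x) mod N \<in> X" using X_props[OF N1 oN] unfolding X_def by auto
  have dk': "N dvd 2^k + 1" using dk unfolding N_def by simp
  have G2k: "N dvd (2^(2*k) - 1)"
  proof -
    have "(2::int)^(2*k) - 1 = (2^k + 1)*(2^k - 1)" by (simp add: power_mult algebra_simps power2_eq_square)
    then show ?thesis using dk' by simp
  qed
  have cons: "\<forall>x\<in>X. \<forall>j. (N dvd (2^j*x - x) \<or> N dvd (2^j*x + x)) \<longrightarrow> even j"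
  proof (intro ballI allI impI)
    fix x j assume x: "x \<in> X" and h: "N dvd (2^j*x - x) \<or> N dvd (2^j*x + x)"
    show "even j"
    proof (rule ccontr)
      assume oj: "odd j"
      have a: "N dvd (2^(2*j)*x - x)"
        using h
      proof
        assume h1: "N dvd (2^j*x - x)"
        have "2^(2*j)*x - x = 2^j*(2^j*x - x) + (2^j*x - x)"
          by (simp add: power_mult algebra_simps power2_eq_square)
        then show ?thesis using h1 by (metis dvd_add dvd_mult)
      next
        assume h1: "N dvd (2^j*x + x)"
        have "2^(2*j)*x - x = 2^j*(2^j*x + x) - (2^j*x + x)"
          by (simp add: power_mult algebra_simps power2_eq_square)
        then show ?thesis using h1 by (metis dvd_diff dvd_mult)
      qed
      have b: "N dvd (2^(2*k)*x - x)"
      proof -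
        have "2^(2*k)*x - x = (2^(2*k) - 1)*x" by (simp add: algebra_simps)
        then show ?thesis using G2k by simp
      qed
      have c: "N dvd (2^(gcd (2*j) (2*k))*x - x)" by (rule Ggcd[OF a b])
      define g where "g = gcd j k"
      have gg: "gcd (2*j) (2*k) = 2*g" unfolding g_def by (simp add: gcd_mult_distrib_nat)
      have og: "odd g" using oj unfolding g_def by (metis dvd_trans gcd_dvd1)
      obtain m where m: "k = g*m" unfolding g_def by (metis gcd_dvd2 dvdE)
      have em: "even m" using ek og m by auto
      then obtain m' where m': "m = 2*m'" by blast
      have "k = (2*g)*m'" using m m' by simp
      then have d: "N dvd (2^k*x - x)" using Gmul[OF c[unfolded gg], of m'] by simp
      have e: "N dvd (2^k*x + x)"
      proof -
        have "2^k*x + x = (2^k + 1)*x" by (simp add: algebra_simps)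
        then show ?thesis using dk' by simp
      qed
      have "N dvd (2^k*x + x) - (2^k*x - x)" using d e by (rule dvd_diff[rotated])
      then have "N dvd 2*x" by simp
      then show False using odd_dvd_2[OF oN] nd[OF x] by blast
    qed
  qed
  have K: "2*k \<ge> 1" using k2 by simp
  obtain f where f: "\<forall>x\<in>X. f ((2*x) mod N) = (\<not> f x) \<and> f ((-x) mod N) = f x"
    using coloring[OF K G2k X2 Xn cons] by blast
  define U where "U = {u\<in>X. 2*u < N \<and> f u}"
  have cU: "4 * card U = card X"
    unfolding U_def using f by (intro color_count[OF oN N1 _ X2 Xn]) (auto simp: X_def)
  have cX: "card X = n - 1" unfolding X_def N_def by simp
  have L: "int (2*n) = 2*N" unfolding N_def by simp
  have Wsub: "U \<subseteq> {u. 0 < u \<and> 2*u < N}" unfolding U_def X_def by auto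
  have good: "\<forall>u\<in>U. \<forall>v\<in>U. u \<noteq> v \<longrightarrow> u \<noteq> 2*v \<and> u \<noteq> N - 2*v"
  proof (intro ballI impI conjI)
    fix u v assume uv: "u \<in> U" "v \<in> U" "u \<noteq> v"
    have v: "v \<in> X" "2*v < N" "f v" "1 \<le> v" using uv unfolding U_def X_def by auto
    have fu: "f u" using uv unfolding U_def by auto
    have m2: "(2*v) mod N = 2*v" using v by (intro mod_pos_pos_trivial) auto
    have f2v: "f (2*v) = (\<not> f v)" using f v(1) m2 by metis
    have X2v: "2*v \<in> X" using X2 v(1) m2 by metis
    show "u \<noteq> 2*v" using f2v fu v(3) by auto
    have "(-(2*v)) mod N = N - 2*v" using X_props(4)[OF N1 oN, of "2*v"] X2v unfolding X_def by auto
    then have "f (N - 2*v) = f (2*v)" using f X2v by metis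
    then show "u \<noteq> N - 2*v" using f2v fu v(3) by auto
  qed
  have "is_SCAC (2*n) 3 (cw ` U) \<and> card (cw ` U) = card U"
    by (rule code_good[OF L oN Wsub good])
  then show ?thesis using cU cX by auto
qed

lemma C3:
  fixes n t :: nat
  assumes odd: "odd n" and d3: "3 dvd n" and n3: "n > 3" and t1: "t \<ge> 1"
    and dk: "int n dvd 2^(2^t) - 1"
  shows "\<exists>C. is_SCAC (2*n) 3 C \<and> 4 * card C = n + 1"
proof -
  define N where "N = int n"
  have oN: "odd N" and N1: "N > 1" using odd n3 unfolding N_def by auto
  obtain w' where w': "n = 3*w'" using d3 by blast
  define w where "w = int w'"
  have w: "N = 3*w" unfolding N_def w_def w' by simp
  have w1: "w \<ge> 1" using w N1 by linarith
  define X where "X = {x\<in>{1..N-1}. \<not> N dvd 3*x}"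
  have Xb: "1 \<le> x \<and> x \<le> N - 1" if "x \<in> X" for x using that unfolding X_def by auto
  have nd3: "\<not> N dvd 3*x" if "x \<in> X" for x using that unfolding X_def by auto
  have nd: "\<not> N dvd x" if "x \<in> X" for x using nd3[OF that] by (metis dvd_mult)
  have X2: "\<forall>x\<in>X. (2*x) mod N \<in> X"
  proof
    fix x assume x: "x \<in> X"
    have m: "N dvd (2*x) mod N - 2*x" by (rule dvd_mod_diff)
    have "(2*x) mod N \<noteq> 0"
    proof
      assume "(2*x) mod N = 0"
      then have "N dvd 2*x" by auto
      then show False using odd_dvd_2[OF oN] nd[OF x] by blast
    qed
    moreover have "0 \<le> (2*x) mod N" "(2*x) mod N < N" using N1 by auto
    ultimately have r: "1 \<le> (2*x) mod N" "(2*x) mod N \<le> N - 1" by linarith+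
    have "\<not> N dvd 3*((2*x) mod N)"
    proof
      assume a: "N dvd 3*((2*x) mod N)"
      have "N dvd 3*((2*x) mod N) - 3*((2*x) mod N - 2*x)" using a m by (metis dvd_diff dvd_mult)
      then have "N dvd 2*(3*x)" by (simp add: algebra_simps)
      then show False using odd_dvd_2[OF oN] nd3[OF x] by blast
    qed
    then show "(2*x) mod N \<in> X" using r unfolding X_def by auto
  qed
  have Xn: "\<forall>x\<in>X. (-x) mod N \<in> X"
  proof
    fix x assume x: "x \<in> X"
    have e: "(-x) mod N = N - x" using X_props(4)[OF N1 oN] Xb[OF x] by auto
    have "\<not> N dvd 3*(N - x)"
    proof
      assume "N dvd 3*(N - x)"
      then have "N dvd 3*N - 3*(N-x)" by (metis dvd_diff dvd_mult dvd_refl)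
      then show False using nd3[OF x] by (simp add: algebra_simps)
    qed
    then show "(-x) mod N \<in> X" using e Xb[OF x] unfolding X_def by auto
  qed
  have dk': "N dvd 2^(2^t) - 1" using dk unfolding N_def by simp
  have cons: "\<forall>x\<in>X. \<forall>j. (N dvd (2^j*x - x) \<or> N dvd (2^j*x + x)) \<longrightarrow> even j"
  proof (intro ballI allI impI)
    fix x j assume x: "x \<in> X" and h: "N dvd (2^j*x - x) \<or> N dvd (2^j*x + x)"
    show "even j"
    proof (rule ccontr)
      assume oj: "odd j"
      have a: "N dvd (2^(2*j)*x - x)"
        using h
      proof
        assume h1: "N dvd (2^j*x - x)"
        have "2^(2*j)*x - x = 2^j*(2^j*x - x) + (2^j*x - x)"
          by (simp add: power_mult algebra_simps power2_eq_square)
        then show ?thesis using h1 by (metis dvd_add dvd_mult)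
      next
        assume h1: "N dvd (2^j*x + x)"
        have "2^(2*j)*x - x = 2^j*(2^j*x + x) - (2^j*x + x)"
          by (simp add: power_mult algebra_simps power2_eq_square)
        then show ?thesis using h1 by (metis dvd_diff dvd_mult)
      qed
      have b: "N dvd (2^(2^t)*x - x)"
      proof -
        have "2^(2^t)*x - x = (2^(2^t) - 1)*x" by (simp add: algebra_simps)
        then show ?thesis using dk' by simp
      qed
      have c: "N dvd (2^(gcd (2*j) (2^t))*x - x)" by (rule Ggcd[OF a b])
      obtain t' where t': "t = Suc t'" using t1 by (cases t) auto
      have t2: "(2::nat)^t = 2*2^(t-1)" unfolding t' by simp
      have "gcd j (2^(t-1)) = 1" using oj by (simp add: coprime_iff_gcd_eq_1[symmetric])
      then have "gcd (2*j) (2^t) = 2" unfolding t2 by (simp add: gcd_mult_distrib_nat[symmetric])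
      then have "N dvd (2^2*x - x)" using c by simp
      then have "N dvd 3*x" by simp
      then show False using nd3[OF x] by blast
    qed
  qed
  have K: "2^t \<ge> (1::nat)" by simp
  obtain f where f: "\<forall>x\<in>X. f ((2*x) mod N) = (\<not> f x) \<and> f ((-x) mod N) = f x"
    using coloring[OF K dk' X2 Xn cons] by blast
  define U where "U = {u\<in>X. 2*u < N \<and> f u}"
  have cU: "4 * card U = card X"
    unfolding U_def using f by (intro color_count[OF oN N1 _ X2 Xn]) (auto simp: X_def)
  have cX: "card X + 2 = n - 1"
  proof -
    have s: "{x\<in>{1..N-1}. N dvd 3*x} = {w, 2*w}"
    proof
      show "{w, 2*w} \<subseteq> {x\<in>{1..N-1}. N dvd 3*x}" using w w1 by auto
      show "{x\<in>{1..N-1}. N dvd 3*x} \<subseteq> {w, 2*w}"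
      proof
        fix x assume "x \<in> {x\<in>{1..N-1}. N dvd 3*x}"
        then have x: "1 \<le> x" "x \<le> N - 1" "3*w dvd 3*x" using w by auto
        then have "w dvd x" by simp
        then obtain c where c: "x = w*c" by blast
        have "c \<ge> 1"
        proof (rule ccontr)
          assume "\<not> c \<ge> 1"
          then have "w*c \<le> w*0" using w1 by (intro mult_left_mono) auto
          then show False using c x by simp
        qed
        moreover have "c \<le> 2"
        proof (rule ccontr)
          assume "\<not> c \<le> 2"
          then have "w*3 \<le> w*c" using w1 by (intro mult_left_mono) auto
          then show False using c x w by linarith
        qed
        ultimately have "c = 1 \<or> c = 2" by auto
        then show "x \<in> {w, 2*w}" using c by auto
      qed
    qed
    have "{1..N-1} = X \<union> {x\<in>{1..N-1}. N dvd 3*x}" unfolding X_def by auto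
    moreover have "X \<inter> {x\<in>{1..N-1}. N dvd 3*x} = {}" unfolding X_def by auto
    moreover have "finite X" unfolding X_def by (rule finite_subset[of _ "{1..N-1}"]) auto
    ultimately have u: "{1..N-1} = X \<union> {w, 2*w}" and dj: "X \<inter> {w, 2*w} = {}" and fX: "finite X"
      unfolding s by auto
    have "card (X \<union> {w, 2*w}) = card X + card {w, 2*w}"
      by (rule card_Un_disjoint[OF fX _ dj]) simp
    then have "card {1..N-1} = card X + card {w, 2*w}" using u by simp
    moreover have "card {w, 2*w} = 2" using w1 by simp
    moreover have "card {1..N-1} = n - 1" unfolding N_def by simp
    ultimately show ?thesis by simp
  qed
  have L: "int (2*n) = 2*N" unfolding N_def by simp
  define W where "W = insert w U"
  have wU: "w \<notin> U" unfolding U_def X_def using w by auto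
  have finU: "finite U" unfolding U_def X_def by (rule finite_subset[of _ "{1..N-1}"]) auto
  have cW: "card W = card U + 1" unfolding W_def using wU finU by simp
  have Wsub: "W \<subseteq> {u. 0 < u \<and> 2*u < N}" unfolding W_def U_def X_def using w w1 by auto
  have goodU: "u \<noteq> 2*v \<and> u \<noteq> N - 2*v" if uv: "u \<in> U" "v \<in> U" "u \<noteq> v" for u v
  proof
    have v: "v \<in> X" "2*v < N" "f v" "1 \<le> v" using uv unfolding U_def X_def by auto
    have fu: "f u" using uv unfolding U_def by auto
    have m2: "(2*v) mod N = 2*v" using v by (intro mod_pos_pos_trivial) auto
    have f2v: "f (2*v) = (\<not> f v)" using f v(1) m2 by metis
    have X2v: "2*v \<in> X" using X2 v(1) m2 by metis
    show "u \<noteq> 2*v" using f2v fu v(3) by auto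
    have "(-(2*v)) mod N = N - 2*v" using X_props(4)[OF N1 oN, of "2*v"] Xb[OF X2v] by auto
    then have "f (N - 2*v) = f (2*v)" using f X2v by metis
    then show "u \<noteq> N - 2*v" using f2v fu v(3) by auto
  qed
  have good: "\<forall>u\<in>W. \<forall>v\<in>W. u \<noteq> v \<longrightarrow> u \<noteq> 2*v \<and> u \<noteq> N - 2*v"
  proof (intro ballI impI)
    fix u v assume uv: "u \<in> W" "v \<in> W" "u \<noteq> v"
    show "u \<noteq> 2*v \<and> u \<noteq> N - 2*v"
    proof (cases "u = w")
      case True
      then have v: "v \<in> U" using uv unfolding W_def by auto
      then have vX: "v \<in> X" unfolding U_def by auto
      show ?thesis
      proof
        show "u \<noteq> 2*v"
        proof
          assume "u = 2*v"
          then have "N dvd 2*(3*v)" using True w by simp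
          then show False using odd_dvd_2[OF oN] nd3[OF vX] by blast
        qed
        show "u \<noteq> N - 2*v" using True w uv(3) by auto
      qed
    next
      case False
      then have u: "u \<in> U" using uv unfolding W_def by auto
      then have uX: "u \<in> X" unfolding U_def by auto
      show ?thesis
      proof (cases "v = w")
        case True
        show ?thesis
        proof
          show "u \<noteq> 2*v"
          proof
            assume "u = 2*v"
            then have "N dvd 3*u" using True w by simp
            then show False using nd3[OF uX] by blast
          qed
          show "u \<noteq> N - 2*v" using True w uv(3) by auto
        qed
      next
        case False
        then have "v \<in> U" using uv unfolding W_def by auto
        then show ?thesis using goodU u uv(3) by blast
      qed
    qed
  qed
  have "is_SCAC (2*n) 3 (cw ` W) \<and> card (cw ` W) = card W"
    by (rule code_good[OF L oN Wsub good])
  then show ?thesis using cU cX cW n3 by auto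
qed

lemma scac_empty: "is_SCAC L 3 {}" unfolding is_SCAC_def by simp

lemma MS_eq:
  assumes ex: "is_SCAC L 3 C0" "card C0 = m" and up: "\<forall>C. is_SCAC L 3 C \<longrightarrow> card C \<le> m"
  shows "M_S L 3 = m"
proof -
  define S where "S = {card C | C. is_SCAC L 3 C}"
  have "S \<subseteq> {..m}" unfolding S_def using up by auto
  then have fin: "finite S" by (rule finite_subset) simp
  have "m \<in> S" unfolding S_def using ex by blast
  then have "m \<le> Max S" using fin by simp
  moreover have "Max S \<le> m" using fin \<open>m \<in> S\<close> \<open>S \<subseteq> {..m}\<close> by (metis Max_in atMost_iff empty_iff subsetD)
  ultimately show ?thesis unfolding M_S_def S_def by simp
qed

lemma upper_all:
  assumes sc: "is_SCAC L 3 C" and ev: "even L" and L18: "L \<ge> 18"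
  shows "4 * card C \<le> L div 2 + 2" and "L mod 8 = 4 \<Longrightarrow> 4 * card C \<le> L div 2 - 2"
proof -
  show "4 * card C \<le> L div 2 + 2"
  proof (cases "card C \<ge> 2")
    case True then show ?thesis using upper_main(1)[OF sc ev L18] by simp
  next
    case False then show ?thesis using L18 by simp
  qed
  show "L mod 8 = 4 \<Longrightarrow> 4 * card C \<le> L div 2 - 2"
  proof (cases "card C \<ge> 2")
    case True then show "L mod 8 = 4 \<Longrightarrow> ?thesis" using upper_main(3)[OF sc ev L18] by simp
  next
    case False then show "L mod 8 = 4 \<Longrightarrow> ?thesis" using L18 by simp
  qed
qed

lemma case2:
  fixes n k :: nat
  assumes L: "L = 2*n" and L18: "L \<ge> 18" and odd: "odd n" and n1: "n > 1" and ek: "even k" and k2: "k \<ge> 2"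
    and dk: "int n dvd 2^k + 1"
  shows "M_S L 3 = (L - 2) div 8"
proof -
  obtain C0 where C0: "is_SCAC (2*n) 3 C0" "4 * card C0 = n - 1" using C2[OF odd n1 ek k2 dk] by blast
  have m: "card C0 = (L - 2) div 8" using C0(2) L by simp
  have ev: "even L" using L by simp
  show ?thesis
  proof (rule MS_eq)
    show "is_SCAC L 3 C0" using C0 L by simp
    show "card C0 = (L - 2) div 8" by (rule m)
    show "\<forall>C. is_SCAC L 3 C \<longrightarrow> card C \<le> (L - 2) div 8"
    proof (intro allI impI)
      fix C assume "is_SCAC L 3 C"
      then have "4 * card C \<le> L div 2 + 2" using upper_all(1) ev L18 by blast
      then have "4 * card C \<le> 4 * card C0 + 3" using C0(2) L n1 by simp
      then have "card C \<le> card C0" by linarith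
      then show "card C \<le> (L - 2) div 8" using m by simp
    qed
  qed
qed

lemma case3:
  fixes n t :: nat
  assumes L: "L = 2*n" and L18: "L \<ge> 18" and odd: "odd n" and d3: "3 dvd n" and n3: "n > 3" and t1: "t \<ge> 1"
    and dk: "int n dvd 2^(2^t) - 1"
  shows "M_S L 3 = (L + 2) div 8"
proof -
  obtain C0 where C0: "is_SCAC (2*n) 3 C0" "4 * card C0 = n + 1" using C3[OF odd d3 n3 t1 dk] by blast
  have m: "card C0 = (L + 2) div 8" using C0(2) L by simp
  have ev: "even L" using L by simp
  show ?thesis
  proof (rule MS_eq)
    show "is_SCAC L 3 C0" using C0 L by simp
    show "card C0 = (L + 2) div 8" by (rule m)
    show "\<forall>C. is_SCAC L 3 C \<longrightarrow> card C \<le> (L + 2) div 8"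
    proof (intro allI impI)
      fix C assume "is_SCAC L 3 C"
      then have "4 * card C \<le> L div 2 + 2" using upper_all(1) ev L18 by blast
      then have "4 * card C \<le> 4 * card C0 + 1" using C0(2) L by simp
      then have "card C \<le> card C0" by linarith
      then show "card C \<le> (L + 2) div 8" using m by simp
    qed
  qed
qed

lemma case1:
  assumes m8: "L mod 8 = 4" and L18: "L \<ge> 18"
  shows "M_S L 3 = (L - 4) div 8"
proof -
  obtain C0 where C0: "is_SCAC L 3 C0" "card C0 = (L - 4) div 8" using C1[OF m8] by blast
  define q where "q = L div 8"
  have Lq: "L = 8*q + 4" unfolding q_def using m8 by (metis div_mult_mod_eq mult.commute)
  have L2: "L = 2*(4*q+2)" using Lq by simp
  have ev: "even L" using L2 by simp
  have d2: "L div 2 = 4*q+2" using L2 by simp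
  have d8: "(L - 4) div 8 = q" using Lq by simp
  show ?thesis
  proof (rule MS_eq[OF C0])
    show "\<forall>C. is_SCAC L 3 C \<longrightarrow> card C \<le> (L - 4) div 8"
    proof (intro allI impI)
      fix C assume "is_SCAC L 3 C"
      then have "4 * card C \<le> L div 2 - 2" using upper_all(2) ev L18 m8 by blast
      then have "4 * card C \<le> 4 * q" using d2 by simp
      then show "card C \<le> (L - 4) div 8" using d8 by simp
    qed
  qed
qed

lemma fam_b:
  fixes t :: nat
  assumes "t \<ge> 1" and L: "L = 2*(2*a^2 + 2*a + 1)" and a: "a = (2::nat)^(t-1)" and L18: "L \<ge> 18"
  shows "M_S L 3 = (L - 2) div 8"
proof -
  obtain s where s: "t = Suc s" using assms(1) by (cases t) auto
  have a1: "a \<ge> 1" using a by simp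
  define n where "n = 2*a^2 + 2*a + 1"
  define k where "k = 4*s + 2"
  have "(2::int)^k = 4 * (int a)^4" unfolding k_def a s by (simp add: power_add power_mult[symmetric] algebra_simps)
  then have "(2::int)^k + 1 = int n * (2*(int a)^2 - 2*int a + 1)" unfolding n_def
    by (simp add: algebra_simps power2_eq_square power4_eq_xxxx)
  then have dk: "int n dvd 2^k + 1" by simp
  show ?thesis
    by (rule case2[of L n k]) (use L L18 a1 dk in \<open>auto simp: n_def k_def\<close>)
qed

lemma fam_minus:
  fixes t a :: nat
  assumes t2: "t \<ge> 2" and L: "L = 2*(2*a^2 - 2*a + 1)" and a: "a = (2::nat)^(t-1)" and L18: "L \<ge> 18"
  shows "M_S L 3 = (L - 2) div 8"
proof -
  obtain s where s: "t = Suc s" using t2 by (cases t) auto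
  have a2: "a \<ge> 2" using a t2 s by (simp add: self_le_power)
  have le: "2*a \<le> 2*a^2" using a2 by (simp add: power2_eq_square)
  define n where "n = 2*a^2 - 2*a + 1"
  have ni: "int n = 2*(int a)^2 - 2*int a + 1" unfolding n_def using le by (simp add: of_nat_diff)
  define k where "k = 4*s + 2"
  have "(2::int)^k = 4 * (int a)^4" unfolding k_def a s by (simp add: power_add power_mult[symmetric] algebra_simps)
  then have "(2::int)^k + 1 = int n * (2*(int a)^2 + 2*int a + 1)" unfolding ni
    by (simp add: algebra_simps power2_eq_square power4_eq_xxxx)
  then have dk: "int n dvd 2^k + 1" by simp
  have on: "odd n" unfolding n_def using le by (simp add: power2_eq_square)
  have "int a * (int a - 1) \<ge> int a * 1" using a2 by (intro mult_left_mono) auto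
  then have "int n > 1" unfolding ni using a2 by (simp add: power2_eq_square algebra_simps)
  then have n1: "n > 1" by simp
  show ?thesis
    by (rule case2[of L n k]) (use L L18 on n1 dk in \<open>auto simp: n_def k_def\<close>)
qed

theorem mainTheorem9:
  fixes L :: nat
  assumes "L \<ge> 18"
  shows "(L mod 8 = 4 \<longrightarrow> M_S L 3 = (L - 4) div 8)
    \<and> (((\<exists>t::nat. t \<ge> 1 \<and> L = 2^(2*t+1) + 2)
         \<or> (\<exists>t::nat. t \<ge> 2 \<and> L = 2^(2*t) - 2^(t+1) + 2)
         \<or> (\<exists>t::nat. t \<ge> 1 \<and> L = 2^(2*t) + 2^(t+1) + 2))
        \<longrightarrow> M_S L 3 = (L - 2) div 8)
    \<and> ((\<exists>t::nat. t \<ge> 2 \<and> L = 2^(2^t+1) - 2) \<longrightarrow> M_S L 3 = (L + 2) div 8)"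
proof (intro conjI impI)
  note L18 = assms
  show "L mod 8 = 4 \<Longrightarrow> M_S L 3 = (L - 4) div 8" using case1 L18 by blast
  show "M_S L 3 = (L - 2) div 8" if fam: "(\<exists>t::nat. t \<ge> 1 \<and> L = 2^(2*t+1) + 2)
         \<or> (\<exists>t::nat. t \<ge> 2 \<and> L = 2^(2*t) - 2^(t+1) + 2)
         \<or> (\<exists>t::nat. t \<ge> 1 \<and> L = 2^(2*t) + 2^(t+1) + 2)"
    using fam
  proof (elim disjE exE conjE)
    fix t :: nat assume t1: "t \<ge> 1" and L: "L = 2^(2*t+1) + 2"
    define n :: nat where "n = 2^(2*t) + 1"
    have Ln: "L = 2*n" unfolding L n_def by simp
    have on: "odd n" unfolding n_def using t1 by simp
    have n1: "n > 1" unfolding n_def by simp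
    have dk: "int n dvd 2^(2*t) + 1" unfolding n_def by (simp add: add.commute)
    show "M_S L 3 = (L - 2) div 8" by (rule case2[OF Ln L18 on n1 _ _ dk]) (use t1 in auto)
  next
    fix t :: nat assume t2: "t \<ge> 2" and L: "L = 2^(2*t) - 2^(t+1) + 2"
    obtain s where s: "t = Suc s" using t2 by (cases t) auto
    define a :: nat where "a = 2^(t-1)"
    have a1: "a \<ge> 1" unfolding a_def by simp
    have p1: "(2::nat)^(2*t) = 4*a^2" unfolding a_def s by (simp add: power_mult[symmetric] power_add mult.commute)
    have p2: "(2::nat)^(t+1) = 4*a" unfolding a_def s by simp
    have aa: "a \<le> a^2" using a1 by (simp add: power2_eq_square)
    have "L = 2*(2*a^2 - 2*a + 1)" unfolding L p1 p2 using aa by simp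
    then show "M_S L 3 = (L - 2) div 8" using fam_minus[OF t2 _ a_def L18] by blast
  next
    fix t :: nat assume t1: "t \<ge> 1" and L: "L = 2^(2*t) + 2^(t+1) + 2"
    obtain s where s: "t = Suc s" using t1 by (cases t) auto
    define a :: nat where "a = 2^(t-1)"
    have p1: "(2::nat)^(2*t) = 4*a^2" unfolding a_def s by (simp add: power_mult[symmetric] power_add mult.commute)
    have p2: "(2::nat)^(t+1) = 4*a" unfolding a_def s by simp
    have "L = 2*(2*a^2 + 2*a + 1)" unfolding L p1 p2 by simp
    then show "M_S L 3 = (L - 2) div 8" using fam_b[OF t1 _ a_def L18] by blast
  qed
  show "M_S L 3 = (L + 2) div 8" if fam: "\<exists>t::nat. t \<ge> 2 \<and> L = 2^(2^t+1) - 2"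
  proof -
    obtain t :: nat where t2: "t \<ge> 2" and L: "L = 2^(2^t+1) - 2" using fam by blast
    define X :: nat where "X = 2^(2^t)"
    define n where "n = X - 1"
    have "(2::nat)^2 \<le> 2^t" using t2 by (rule power_increasing) simp
    then have t4: "2^t \<ge> (4::nat)" by simp
    have X16: "X \<ge> 16" unfolding X_def using power_increasing[OF t4, of "2::nat"] by simp
    have Ln: "L = 2*n" unfolding L n_def X_def by (simp add: right_diff_distrib')
    have evX: "even X" unfolding X_def by simp
    obtain Y where Y: "X = 2*Y" using evX by blast
    have "n = 2*(Y-1) + 1" unfolding n_def Y using X16 Y by simp
    then have on: "odd n" by simp
    have "X mod 3 = 1"
    proof -
      have "even ((2::nat)^t)" using t2 by simp
      then obtain m :: nat where m: "(2::nat)^t = 2*m" by blast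
      have "X = 4^m" unfolding X_def m by (simp add: power_mult)
      moreover have "(4::nat)^m mod 3 = (4 mod 3)^m mod 3" by (rule power_mod[symmetric])
      ultimately show ?thesis by simp
    qed
    then have "X = 3*(X div 3) + 1" by (metis div_mult_mod_eq mult.commute)
    then have "n = 3*(X div 3)" unfolding n_def by simp
    then have d3: "3 dvd n" by simp
    have n3: "n > 3" unfolding n_def using X16 by simp
    have dk: "int n dvd 2^(2^t) - 1" unfolding n_def X_def using X16 by (simp add: of_nat_diff)
    have t1: "t \<ge> 1" using t2 by simp
    show ?thesis by (rule case3[OF Ln L18 on d3 n3 t1 dk])
  qed
qed

end
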